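(* $SL_3(\mathfrak{o})$ is the disjoint union $\Delta_2\sqcup\Delta_{1,0}\sqcup\Delta_{1,1}$, where $$\Delta_2=\bigsqcup_{y\in Y(\mathfrak{o})}\bigsqcup_{d\in D(3)}\bigsqcup_{u\in U(3)}\varphi_2(y^{-1})du\Gamma_\infty(3),\quad \Delta_{1,0}=\bigsqcup_{\substack{y_1,y_2\in Y(\mathfrak{o})\\ y_2\neq I_2}}\bigsqcup_{d\in D(3)}\bigsqcup_{u\in U(3)}\varphi_2(y_1^{-1})\varphi_1(y_2^{-1})du\Gamma_\infty(3),$$ $$\Delta_{1,1}=\bigsqcup_{\substack{y_1,y_2,y_3\in Y(\mathfrak{o})\\ y_2,y_3\neq I_2}}\bigsqcup_{d\in D(3)}\bigsqcup_{u\in U(3)}\varphi_2(y_1^{-1})\varphi_1(y_2^{-1})\varphi_2(y_3^{-1})du\Gamma_\infty(3).$$ In particular, all the sets appearing on the right-hand sides are pairwise disjoint and their union is $SL_3(\mathfrak{o})$.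
   Context: Let $\omega=e^{2\pi i/3}$, $\mathfrak{o}=\mathbb{Z}[\omega]$, $\mathfrak{o}^\times$ its unit group. Fix representatives of nonzero elements modulo units ("$c\in(\mathfrak{o}-\{0\})/\mathfrak{o}^\times$") and, for each nonzero $c$, representatives of $\mathfrak{o}/c\mathfrak{o}$ ("$a\in\mathfrak{o}/c\mathfrak{o}$"). $Y(\mathfrak{o})=\{\begin{pmatrix}a&b\\c&d\end{pmatrix}\in SL_2(\mathfrak{o}) : c\in(\mathfrak{o}-\{0\})/\mathfrak{o}^\times,\ a\in\mathfrak{o}/c\mathfrak{o}\}\cup\{I_2\}$. $\Gamma(3)=\{A\in SL_3(\mathfrak{o}):A\equiv I_3\pmod{3\mathfrak{o}}\}$ (entrywise), $\Gamma_\infty(3)$ its subgroup of upper triangular unipotent matrices. $D(3)$: diagonal $\mathrm{diag}(i,j,k)$ with $i,j,k\in\mathfrak{o}$, $ijk=1$. $U(3)$: matrices $\begin{pmatrix}1&\alpha&\beta\\&1&\gamma\\&&1\end{pmatrix}$ with $\alpha,\beta,\gamma\in\{0,1,2\}+\{0,1,2\}\omega$. For $y=\begin{pmatrix}a&b\\c&d\end{pmatrix}\in SL_2(\mathfrak{o})$, $\varphi_1(y)=\begin{pmatrix}a&b&0\\c&d&0\\0&0&1\end{pmatrix}$, $\varphi_2(y)=\begin{pmatrix}1&0&0\\0&a&b\\0&c&d\end{pmatrix}$. For $A=(a_{ij})\in SL_3(\mathfrak{o})$: $\Delta_2=\{A: a_{21}=a_{31}=0\}$, $\Delta_{1,0}=\{A:(a_{21}\neq0\text{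 or }a_{31}\neq0)\text{ and }a_{21}a_{32}-a_{22}a_{31}=0\}$, $\Delta_{1,1}=\{A: a_{21}a_{32}-a_{22}a_{31}\neq0\}$. *)

theory Defs
  imports "HOL-Analysis.Analysis" "HOL-Library.Disjoint_Sets"
begin

type_synonym mat3 = "complex^3^3"
type_synonym mat2 = "complex^2^2"

definition omega :: complex where
  "omega = exp (2 * pi * \<i> / 3)"

definition ZO :: "complex set" where
  "ZO = {of_int a + of_int b * omega | a b. True}"

definition ZO_units :: "complex set" where
  "ZO_units = {u \<in> ZO. \<exists>v \<in> ZO. u * v = 1}"

definition mk3 :: "complex \<Rightarrow> complex \<Rightarrow> complex \<Rightarrow> complex \<Rightarrow> complex \<Rightarrow> complex
    \<Rightarrow> complex \<Rightarrow> complex \<Rightarrow> complex \<Rightarrow> mat3" where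
  "mk3 a11 a12 a13 a21 a22 a23 a31 a32 a33 =
     vector [vector [a11, a12, a13], vector [a21, a22, a23], vector [a31, a32, a33]]"

definition SL3 :: "mat3 set" where
  "SL3 = {A. (\<forall>i j. A $ i $ j \<in> ZO) \<and> det A = 1}"

definition SL2 :: "mat2 set" where
  "SL2 = {A. (\<forall>i j. A $ i $ j \<in> ZO) \<and> det A = 1}"

definition Gamma3 :: "mat3 set" where
  "Gamma3 = {A \<in> SL3. \<forall>i j. \<exists>z \<in> ZO. A $ i $ j - (mat 1 :: mat3) $ i $ j = 3 * z}"

definition Gamma_inf3 :: "mat3 set" where
  "Gamma_inf3 = {A \<in> Gamma3. \<exists>x y z. A = mk3 1 x z 0 1 y 0 0 1}"

definition D3 :: "mat3 set" where
  "D3 = {mk3 i 0 0 0 j 0 0 0 k | i j k. i \<in> ZO \<and> j \<in> ZO \<and> k \<in> ZO \<and> i * j * k = 1}"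

definition R3 :: "complex set" where
  "R3 = {of_nat m + of_nat n * omega | m n. m < (3::nat) \<and> n < 3}"

definition U3 :: "mat3 set" where
  "U3 = {mk3 1 \<alpha> \<beta> 0 1 \<gamma> 0 0 1 | \<alpha> \<beta> \<gamma>. \<alpha> \<in> R3 \<and> \<beta> \<in> R3 \<and> \<gamma> \<in> R3}"

definition phi1 :: "mat2 \<Rightarrow> mat3" where
  "phi1 y = mk3 (y$1$1) (y$1$2) 0 (y$2$1) (y$2$2) 0 0 0 1"

definition phi2 :: "mat2 \<Rightarrow> mat3" where
  "phi2 y = mk3 1 0 0 0 (y$1$1) (y$1$2) 0 (y$2$1) (y$2$2)"

definition valid_reps :: "complex set \<Rightarrow> (complex \<Rightarrow> complex set) \<Rightarrow> bool" where
  "valid_reps C Rep \<longleftrightarrow>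
     C \<subseteq> ZO - {0} \<and>
     (\<forall>x \<in> ZO - {0}. \<exists>!c. c \<in> C \<and> (\<exists>u \<in> ZO_units. x = u * c)) \<and>
     (\<forall>c \<in> C. Rep c \<subseteq> ZO \<and> (\<forall>x \<in> ZO. \<exists>!a. a \<in> Rep c \<and> (\<exists>z \<in> ZO. x - a = c * z)))"

definition Yset :: "complex set \<Rightarrow> (complex \<Rightarrow> complex set) \<Rightarrow> mat2 set" where
  "Yset C Rep = {y \<in> SL2. y $ 2 $ 1 \<in> C \<and> y $ 1 $ 1 \<in> Rep (y $ 2 $ 1)} \<union> {mat 1}"

definition Delta2 :: "mat3 set" where
  "Delta2 = {A \<in> SL3. A$2$1 = 0 \<and> A$3$1 = 0}"

definition Delta10 :: "mat3 set" where
  "Delta10 = {A \<in> SL3. (A$2$1 \<noteq> 0 \<or> A$3$1 \<noteq> 0) \<and> A$2$1 * A$3$2 - A$2$2 * A$3$1 = 0}"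

definition Delta11 :: "mat3 set" where
  "Delta11 = {A \<in> SL3. A$2$1 * A$3$2 - A$2$2 * A$3$1 \<noteq> 0}"

definition coset3 :: "mat3 \<Rightarrow> mat3 set" where
  "coset3 g = {g ** h | h. h \<in> Gamma_inf3}"

end

theory Submission
  imports Defs
begin

lemma omega_eq: "omega = Complex (-1/2) (sqrt 3 / 2)"
  unfolding omega_def
  by (simp add: Complex_eq exp_eq_polar cis.ctr cos_120' sin_120' mult.commute)

lemma Re_omega[simp]: "Re omega = -1/2" and Im_omega[simp]: "Im omega = sqrt 3 / 2"
  by (simp_all add: omega_eq)

lemma omega_sq: "omega * omega = -1 - omega"
  by (simp add: complex_eq_iff omega_eq algebra_simps)

lemma ZO_iff: "z \<in> ZO \<longleftrightarrow> (\<exists>a b::int. z = of_int a + of_int b * omega)"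
  unfolding ZO_def by auto

lemma ZO_of_int[simp, intro]: "of_int a \<in> ZO"
  unfolding ZO_iff by (rule exI[of _ a], rule exI[of _ 0]) simp

lemma ZO_0[simp, intro]: "0 \<in> ZO" using ZO_of_int[of 0] by simp
lemma ZO_1[simp, intro]: "1 \<in> ZO" using ZO_of_int[of 1] by simp
lemma ZO_numeral[simp, intro]: "numeral n \<in> ZO" using ZO_of_int[of "numeral n"] by simp
lemma ZO_omega[simp, intro]: "omega \<in> ZO"
  unfolding ZO_iff by (rule exI[of _ 0], rule exI[of _ 1]) simp

lemma ZO_add[simp, intro]: "x \<in> ZO \<Longrightarrow> y \<in> ZO \<Longrightarrow> x + y \<in> ZO"
proof -
  assume "x \<in> ZO" "y \<in> ZO"
  then obtain a b c d where "x = of_int a + of_int b * omega" "y = of_int c + of_int d * omega"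
    unfolding ZO_iff by blast
  hence "x + y = of_int (a+c) + of_int (b+d) * omega" by (simp add: algebra_simps)
  thus ?thesis unfolding ZO_iff by blast
qed

lemma ZO_uminus[simp, intro]: "x \<in> ZO \<Longrightarrow> - x \<in> ZO"
proof -
  assume "x \<in> ZO"
  then obtain a b where "x = of_int a + of_int b * omega"
    unfolding ZO_iff by blast
  hence "- x = of_int (-a) + of_int (-b) * omega" by (simp add: algebra_simps)
  thus ?thesis unfolding ZO_iff by blast
qed

lemma ZO_diff[simp, intro]: "x \<in> ZO \<Longrightarrow> y \<in> ZO \<Longrightarrow> x - y \<in> ZO"
  using ZO_add[of x "-y"] ZO_uminus[of y] by simp

lemma ZO_mult[simp, intro]: "x \<in> ZO \<Longrightarrow> y \<in> ZO \<Longrightarrow> x * y \<in> ZO"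
proof -
  assume "x \<in> ZO" "y \<in> ZO"
  then obtain a b c d where xy: "x = of_int a + of_int b * omega" "y = of_int c + of_int d * omega"
    unfolding ZO_iff by blast
  have "x * y = of_int a * of_int c + (of_int a * of_int d + of_int b * of_int c) * omega
        + of_int b * of_int d * (omega * omega)" by (simp add: xy algebra_simps)
  also have "\<dots> = of_int (a * c - b * d) + of_int (a * d + b * c - b * d) * omega"
    by (simp add: omega_sq algebra_simps)
  finally show ?thesis unfolding ZO_iff by blast
qed

lemma ZO_power[simp, intro]: "x \<in> ZO \<Longrightarrow> x ^ n \<in> ZO"
  by (induction n) auto

lemma norm_ZO: "(cmod (of_int a + of_int b * omega))\<^sup>2 = of_int (a^2 - a*b + b^2)"
  unfolding cmod_power2 by (simp add: power2_eq_square algebra_simps)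

lemma ZO_norm_nat: assumes "z \<in> ZO" shows "\<exists>n::nat. (cmod z)\<^sup>2 = real n"
proof -
  obtain a b where z: "z = of_int a + of_int b * omega" using assms ZO_iff by auto
  have "(cmod z)\<^sup>2 = of_int (a^2 - a*b + b^2)" using z norm_ZO by simp
  moreover have "a^2 - a*b + b^2 \<ge> 0"
  proof -
    have "0 \<le> (a-b)^2 + a^2 + b^2" by simp
    also have "\<dots> = 2 * (a^2 - a*b + b^2)" by (simp add: power2_eq_square algebra_simps)
    finally show ?thesis by simp
  qed
  ultimately show ?thesis by (metis of_int_of_nat_eq nonneg_int_cases)
qed

lemma round_approx: "\<exists>q\<in>ZO. cmod (w - q) < 1"
proof -
  define v where "v = Im w * 2 / sqrt 3"
  define u where "u = Re w + v / 2"
  have s3: "sqrt 3 * sqrt 3 = (3::real)" by simp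
  have wuv: "w = of_real u + of_real v * omega"
    by (simp add: complex_eq_iff u_def v_def)
  define e1 where "e1 = u - of_int (round u)"
  define e2 where "e2 = v - of_int (round v)"
  have h1: "\<bar>e1\<bar> \<le> 1/2" unfolding e1_def using of_int_round_abs_le[of u] by linarith
  have h2: "\<bar>e2\<bar> \<le> 1/2" unfolding e2_def using of_int_round_abs_le[of v] by linarith
  define q where "q = (of_int (round u) + of_int (round v) * omega :: complex)"
  have qZ: "q \<in> ZO" unfolding q_def ZO_iff by blast
  have "w - q = of_real e1 + of_real e2 * omega"
    by (simp add: wuv q_def e1_def e2_def complex_eq_iff algebra_simps)
  hence "(cmod (w - q))\<^sup>2 = e1^2 - e1*e2 + e2^2"
    unfolding cmod_power2 by (simp add: power2_eq_square algebra_simps)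
  also have "\<dots> < 1"
  proof -
    have "e1^2 = \<bar>e1\<bar>^2" by simp
    also have "\<dots> \<le> (1/2)^2" by (rule power_mono) (use h1 in auto)
    finally have A: "e1^2 \<le> 1/4" by (simp add: power2_eq_square)
    have "e2^2 = \<bar>e2\<bar>^2" by simp
    also have "\<dots> \<le> (1/2)^2" by (rule power_mono) (use h2 in auto)
    finally have B: "e2^2 \<le> 1/4" by (simp add: power2_eq_square)
    have "\<bar>e1*e2\<bar> = \<bar>e1\<bar> * \<bar>e2\<bar>" by (simp add: abs_mult)
    also have "\<dots> \<le> 1/2 * (1/2)" by (rule mult_mono) (use h1 h2 in auto)
    finally have C: "\<bar>e1*e2\<bar> \<le> 1/4" by simp
    from A B C
    show ?thesis by linarith
  qed
  finally have "(cmod (w - q))\<^sup>2 < 1" .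
  hence "cmod (w - q) < 1" by (simp add: power_less_one_iff abs_square_less_1)
  with qZ show ?thesis by blast
qed

lemma ZO_division:
  assumes "x \<in> ZO" "y \<in> ZO" "y \<noteq> 0"
  shows "\<exists>q\<in>ZO. cmod (x - q * y) < cmod y"
proof -
  obtain q where q: "q \<in> ZO" "cmod (x / y - q) < 1" using round_approx by blast
  have "x - q * y = (x / y - q) * y" using assms(3) by (simp add: field_simps)
  hence "cmod (x - q * y) = cmod (x / y - q) * cmod y" by (simp add: norm_mult)
  also have "\<dots> < cmod y" using q(2) assms(3) by simp
  finally show ?thesis using q(1) by blast
qed

definition cop :: "complex \<Rightarrow> complex \<Rightarrow> bool" where
  "cop a b \<longleftrightarrow> (\<exists>p\<in>ZO. \<exists>q\<in>ZO. p * a + q * b = 1)"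

lemma gcd_exists:
  assumes xz: "x \<in> ZO" "z \<in> ZO" and nz: "x \<noteq> 0 \<or> z \<noteq> 0"
  shows "\<exists>g\<in>ZO. \<exists>e\<in>ZO. \<exists>f\<in>ZO. g \<noteq> 0 \<and> x = g * e \<and> z = g * f \<and>
           (\<exists>p\<in>ZO. \<exists>q\<in>ZO. g = p * x + q * z)"
proof -
  define P where "P n \<longleftrightarrow> (\<exists>p\<in>ZO. \<exists>q\<in>ZO. p*x + q*z \<noteq> 0 \<and> (cmod (p*x+q*z))\<^sup>2 = real n)" for n
  have "\<exists>n. P n"
  proof (cases "x \<noteq> 0")
    case True
    obtain n where "(cmod x)\<^sup>2 = real n" using ZO_norm_nat xz by blast
    hence "P n" unfolding P_def using True
      by (intro bexI[of _ 1] bexI[of _ 0]) auto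
    thus ?thesis by blast
  next
    case False
    hence "z \<noteq> 0" using nz by blast
    obtain n where "(cmod z)\<^sup>2 = real n" using ZO_norm_nat xz by blast
    hence "P n" unfolding P_def using \<open>z \<noteq> 0\<close>
      by (intro bexI[of _ 0] bexI[of _ 1]) auto
    thus ?thesis by blast
  qed
  then obtain n where Pn: "P n" and least: "\<And>m. m < n \<Longrightarrow> \<not> P m"
    using exists_least_iff[of P] by blast
  then obtain p q where pq: "p \<in> ZO" "q \<in> ZO" "p*x + q*z \<noteq> 0" "(cmod (p*x+q*z))\<^sup>2 = real n"
    unfolding P_def by blast
  define g where "g = p*x + q*z"
  have gZ: "g \<in> ZO" using pq xz unfolding g_def by auto
  have divides: "\<exists>e\<in>ZO. w = g * e" if w: "w \<in> ZO" "\<exists>a\<in>ZO. \<exists>b\<in>ZO. w = a*x + b*z" for w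
  proof -
    obtain a b where ab: "a \<in> ZO" "b \<in> ZO" "w = a*x + b*z" using w by blast
    obtain e where e: "e \<in> ZO" "cmod (w - e * g) < cmod g"
      using ZO_division[of w g] w gZ pq(3) unfolding g_def by blast
    have "w - e * g = (a - e*p) * x + (b - e*q) * z" unfolding g_def ab(3) by (simp add: algebra_simps)
    have "w - e * g = 0"
    proof (rule ccontr)
      assume ne: "w - e * g \<noteq> 0"
      obtain m where m: "(cmod (w - e*g))\<^sup>2 = real m" using ZO_norm_nat[of "w - e*g"] w gZ e by auto
      have "P m" unfolding P_def
        by (rule bexI[of _ "a - e*p"], rule bexI[of _ "b - e*q"])
           (use ne m ab pq e \<open>w - e * g = (a - e*p) * x + (b - e*q) * z\<close> in auto)
      moreover have "(cmod (w - e*g))\<^sup>2 < (cmod g)\<^sup>2"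
        using e(2) by (simp add: power_strict_mono)
      hence "m < n" using m pq(4) unfolding g_def by simp
      ultimately show False using least by blast
    qed
    thus ?thesis using e(1) by (intro bexI[of _ e]) (auto simp: algebra_simps)
  qed
  have "\<exists>a\<in>ZO. \<exists>b\<in>ZO. x = a*x + b*z" by (rule bexI[of _ 1], rule bexI[of _ 0]) auto
  then obtain e where e: "e \<in> ZO" "x = g * e"
    using divides[of x] xz by blast
  have "\<exists>a\<in>ZO. \<exists>b\<in>ZO. z = a*x + b*z" by (rule bexI[of _ 0], rule bexI[of _ 1]) auto
  then obtain f where f: "f \<in> ZO" "z = g * f"
    using divides[of z] xz by blast
  show ?thesis using gZ e f pq unfolding g_def by blast
qed

lemma cop_div:
  assumes "c \<in> ZO" "d \<in> ZO" "x \<in> ZO" "cop c d" "w \<in> ZO" "x * d = c * w"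
  shows "\<exists>z\<in>ZO. x = c * z"
proof -
  obtain p q where pq: "p \<in> ZO" "q \<in> ZO" "p * c + q * d = 1" using assms(4) unfolding cop_def by blast
  have "x = x * (p * c + q * d)" using pq by simp
  also have "\<dots> = c * (x * p + q * w)" using assms(6) by (simp add: algebra_simps)
  finally show ?thesis using assms pq by blast
qed

lemma cop_assoc:
  assumes Z: "a \<in> ZO" "b \<in> ZO" "a' \<in> ZO" "b' \<in> ZO" and "cop a b" "cop a' b'" "a * b' = a' * b"
  shows "\<exists>s\<in>ZO. \<exists>t\<in>ZO. s * t = 1 \<and> a' = s * a \<and> b' = s * b"
proof -
  obtain p q where pq: "p \<in> ZO" "q \<in> ZO" "p * a + q * b = 1" using assms(5) unfolding cop_def by blast
  obtain p' q' where pq': "p' \<in> ZO" "q' \<in> ZO" "p' * a' + q' * b' = 1" using assms(6) unfolding cop_def by blast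
  define s where "s = p * a' + q * b'"
  define t where "t = p' * a + q' * b"
  have 1: "a' = s * a"
  proof -
    have "a' = a' * (p * a + q * b)" using pq by simp
    also have "\<dots> = p * a * a' + q * (a' * b)" by (simp add: algebra_simps)
    also have "\<dots> = s * a" using assms(7) unfolding s_def by (simp add: algebra_simps)
    finally show ?thesis .
  qed
  have 2: "b' = s * b"
  proof -
    have "b' = b' * (p * a + q * b)" using pq by simp
    also have "\<dots> = p * (a * b') + q * b * b'" by (simp add: algebra_simps)
    also have "\<dots> = s * b" using assms(7) unfolding s_def by (simp add: algebra_simps)
    finally show ?thesis .
  qed
  have 3: "a = t * a'"
  proof -
    have "a = a * (p' * a' + q' * b')" using pq' by simp
    also have "\<dots> = p' * a * a' + q' * (a * b')" by (simp add: algebra_simps)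
    also have "\<dots> = t * a'" using assms(7) unfolding t_def by (simp add: algebra_simps)
    finally show ?thesis .
  qed
  have 4: "b = t * b'"
  proof -
    have "b = b * (p' * a' + q' * b')" using pq' by simp
    also have "\<dots> = p' * (a' * b) + q' * b * b'" by (simp add: algebra_simps)
    also have "\<dots> = t * b'" using assms(7) unfolding t_def by (simp add: algebra_simps)
    finally show ?thesis .
  qed
  have "s * t = 1"
  proof -
    have "1 = p * a + q * b" using pq by simp
    also have "\<dots> = p * (t * (s * a)) + q * (t * (s * b))"
    proof -
      have ta: "t * (s * a) = a" by (subst 1[symmetric]) (rule 3[symmetric])
      have tb: "t * (s * b) = b" by (subst 2[symmetric]) (rule 4[symmetric])
      show ?thesis by (simp only: ta tb)
    qed
    also have "\<dots> = (s * t) * (p * a + q * b)" by (simp add: algebra_simps)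
    finally show ?thesis using pq by simp
  qed
  moreover have "s \<in> ZO" "t \<in> ZO" unfolding s_def t_def using Z pq pq' by auto
  ultimately show ?thesis using 1 2 by blast
qed

definition mk2 :: "complex \<Rightarrow> complex \<Rightarrow> complex \<Rightarrow> complex \<Rightarrow> mat2" where
  "mk2 a b c d = vector [vector [a, b], vector [c, d]]"

lemma mk2_nth[simp]:
  "mk2 a b c d $ 1 $ 1 = a" "mk2 a b c d $ 1 $ 2 = b"
  "mk2 a b c d $ 2 $ 1 = c" "mk2 a b c d $ 2 $ 2 = d"
  by (simp_all add: mk2_def)

lemma mk3_nth[simp]:
  "mk3 a11 a12 a13 a21 a22 a23 a31 a32 a33 $ 1 $ 1 = a11"
  "mk3 a11 a12 a13 a21 a22 a23 a31 a32 a33 $ 1 $ 2 = a12"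
  "mk3 a11 a12 a13 a21 a22 a23 a31 a32 a33 $ 1 $ 3 = a13"
  "mk3 a11 a12 a13 a21 a22 a23 a31 a32 a33 $ 2 $ 1 = a21"
  "mk3 a11 a12 a13 a21 a22 a23 a31 a32 a33 $ 2 $ 2 = a22"
  "mk3 a11 a12 a13 a21 a22 a23 a31 a32 a33 $ 2 $ 3 = a23"
  "mk3 a11 a12 a13 a21 a22 a23 a31 a32 a33 $ 3 $ 1 = a31"
  "mk3 a11 a12 a13 a21 a22 a23 a31 a32 a33 $ 3 $ 2 = a32"
  "mk3 a11 a12 a13 a21 a22 a23 a31 a32 a33 $ 3 $ 3 = a33"
  by (simp_all add: mk3_def)

lemma mat2_eta: "(y::mat2) = mk2 (y$1$1) (y$1$2) (y$2$1) (y$2$2)"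
  by (simp add: vec_eq_iff forall_2)

lemma mat3_eta: "(A::mat3) = mk3 (A$1$1) (A$1$2) (A$1$3) (A$2$1) (A$2$2) (A$2$3) (A$3$1) (A$3$2) (A$3$3)"
  by (simp add: vec_eq_iff forall_3)

lemma mk2_eq_iff: "mk2 a b c d = mk2 a' b' c' d' \<longleftrightarrow> a = a' \<and> b = b' \<and> c = c' \<and> d = d'"
  by (metis mk2_nth)

lemma mk3_eq_iff: "mk3 a11 a12 a13 a21 a22 a23 a31 a32 a33 = mk3 b11 b12 b13 b21 b22 b23 b31 b32 b33
  \<longleftrightarrow> a11 = b11 \<and> a12 = b12 \<and> a13 = b13 \<and> a21 = b21 \<and> a22 = b22 \<and> a23 = b23 \<and> a31 = b31 \<and> a32 = b32 \<and> a33 = b33"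
  by (metis mk3_nth)

lemma mk2_mult: "mk2 a b c d ** mk2 a' b' c' d' = mk2 (a*a' + b*c') (a*b' + b*d') (c*a' + d*c') (c*b' + d*d')"
  by (simp add: vec_eq_iff forall_2 matrix_matrix_mult_def sum_2)

lemma mk3_mult: "mk3 a11 a12 a13 a21 a22 a23 a31 a32 a33 ** mk3 b11 b12 b13 b21 b22 b23 b31 b32 b33 =
  mk3 (a11*b11 + a12*b21 + a13*b31) (a11*b12 + a12*b22 + a13*b32) (a11*b13 + a12*b23 + a13*b33)
      (a21*b11 + a22*b21 + a23*b31) (a21*b12 + a22*b22 + a23*b32) (a21*b13 + a22*b23 + a23*b33)
      (a31*b11 + a32*b21 + a33*b31) (a31*b12 + a32*b22 + a33*b32) (a31*b13 + a32*b23 + a33*b33)"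
  by (simp add: vec_eq_iff forall_3 matrix_matrix_mult_def sum_3)

lemma mat1_2: "(mat 1 :: mat2) = mk2 1 0 0 1"
  by (simp add: vec_eq_iff forall_2 mat_def)

lemma mat1_3: "(mat 1 :: mat3) = mk3 1 0 0 0 1 0 0 0 1"
  by (simp add: vec_eq_iff forall_3 mat_def)

lemma det_mk2: "det (mk2 a b c d) = a * d - b * c"
  by (simp add: det_2)

lemma det_mk3: "det (mk3 a11 a12 a13 a21 a22 a23 a31 a32 a33) =
   a11*a22*a33 + a12*a23*a31 + a13*a21*a32 - a11*a23*a32 - a12*a21*a33 - a13*a22*a31"
  by (simp add: det_3 algebra_simps)

lemma phi1_mk2[simp]: "phi1 (mk2 a b c d) = mk3 a b 0 c d 0 0 0 1"
  by (simp add: phi1_def)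
lemma phi2_mk2[simp]: "phi2 (mk2 a b c d) = mk3 1 0 0 0 a b 0 c d"
  by (simp add: phi2_def)

lemma inv2:
  assumes "det y = 1"
  shows "matrix_inv y = mk2 (y$2$2) (-(y$1$2)) (-(y$2$1)) (y$1$1)"
proof -
  define B where "B = mk2 (y$2$2) (-(y$1$2)) (-(y$2$1)) (y$1$1)"
  have d: "y$1$1 * y$2$2 - y$1$2 * y$2$1 = 1" using assms by (simp add: det_2)
  have yB: "y ** B = mat 1" unfolding B_def mat1_2
    by (subst mat2_eta[of y]) (simp add: mk2_mult mk2_eq_iff algebra_simps d[simplified algebra_simps]) 
  have By: "B ** y = mat 1" unfolding B_def mat1_2
    by (subst (2) mat2_eta[of y]) (simp add: mk2_mult mk2_eq_iff algebra_simps d[simplified algebra_simps])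
  have ex: "\<exists>A'. y ** A' = mat 1 \<and> A' ** y = mat 1" using yB By by blast
  have M: "y ** matrix_inv y = mat 1 \<and> matrix_inv y ** y = mat 1"
    unfolding matrix_inv_def by (rule someI_ex[OF ex])
  have "matrix_inv y = (B ** y) ** matrix_inv y" using By by (simp add: matrix_mul_lid)
  also have "\<dots> = B ** (y ** matrix_inv y)" by (simp add: matrix_mul_assoc)
  also have "\<dots> = B" using M by (simp add: matrix_mul_rid)
  finally show ?thesis unfolding B_def .
qed

lemma inv2_mk2: "a * d - b * c = 1 \<Longrightarrow> matrix_inv (mk2 a b c d) = mk2 d (-b) (-c) a"
  using inv2[of "mk2 a b c d"] by (simp add: det_mk2)

lemma mat3_mult_ZO:
  assumes "\<forall>i j. (A::mat3)$i$j \<in> ZO" "\<forall>i j. (B::mat3)$i$j \<in> ZO"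
  shows "\<forall>i j. (A ** B)$i$j \<in> ZO"
  using assms by (simp add: matrix_matrix_mult_def sum_3)

lemma SL3_mult: "A \<in> SL3 \<Longrightarrow> B \<in> SL3 \<Longrightarrow> A ** B \<in> SL3"
  unfolding SL3_def using mat3_mult_ZO by (auto simp: det_mul)

lemma all3: "(\<forall>i j. (A::mat3)$i$j \<in> S) \<longleftrightarrow>
   A$1$1 \<in> S \<and> A$1$2 \<in> S \<and> A$1$3 \<in> S \<and> A$2$1 \<in> S \<and> A$2$2 \<in> S \<and> A$2$3 \<in> S \<and>
   A$3$1 \<in> S \<and> A$3$2 \<in> S \<and> A$3$3 \<in> S"
  by (simp add: forall_3)

lemma all2: "(\<forall>i j. (A::mat2)$i$j \<in> S) \<longleftrightarrow>
   A$1$1 \<in> S \<and> A$1$2 \<in> S \<and> A$2$1 \<in> S \<and> A$2$2 \<in> S"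
  by (simp add: forall_2)

lemma SL3_mk3: "mk3 a11 a12 a13 a21 a22 a23 a31 a32 a33 \<in> SL3 \<longleftrightarrow>
  a11 \<in> ZO \<and> a12 \<in> ZO \<and> a13 \<in> ZO \<and> a21 \<in> ZO \<and> a22 \<in> ZO \<and> a23 \<in> ZO \<and> a31 \<in> ZO \<and> a32 \<in> ZO \<and> a33 \<in> ZO
  \<and> a11*a22*a33 + a12*a23*a31 + a13*a21*a32 - a11*a23*a32 - a12*a21*a33 - a13*a22*a31 = 1"
  unfolding SL3_def by (simp add: all3 det_mk3)

lemma SL2_iff: "y \<in> SL2 \<longleftrightarrow> y$1$1 \<in> ZO \<and> y$1$2 \<in> ZO \<and> y$2$1 \<in> ZO \<and> y$2$2 \<in> ZO
   \<and> y$1$1 * y$2$2 - y$1$2 * y$2$1 = 1"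
  unfolding SL2_def by (simp add: all2 det_2)

lemma mat1_SL2: "(mat 1 :: mat2) \<in> SL2"
  unfolding SL2_iff mat1_2 by simp

lemma Y_I: "mat 1 \<in> Yset C Rep" unfolding Yset_def by simp

lemma Y_SL2: "y \<in> Yset C Rep \<Longrightarrow> y \<in> SL2"
  unfolding Yset_def using mat1_SL2 by auto

lemma Y_nonI: "y \<in> Yset C Rep \<Longrightarrow> y \<noteq> mat 1 \<Longrightarrow> y$2$1 \<in> C \<and> y$1$1 \<in> Rep (y$2$1)"
  unfolding Yset_def by auto

lemma Y_c0:
  assumes "valid_reps C Rep" "y \<in> Yset C Rep" "y$2$1 = 0" shows "y = mat 1"
proof (rule ccontr)
  assume "y \<noteq> mat 1"
  hence "y$2$1 \<in> C" using Y_nonI assms(2) by blast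
  thus False using assms(1,3) unfolding valid_reps_def by auto
qed

lemma Y_c0_iff:
  assumes "valid_reps C Rep" "y \<in> Yset C Rep" shows "y = mat 1 \<longleftrightarrow> y$2$1 = 0"
  using Y_c0[OF assms] by (auto simp: mat1_2)

lemma inv_mat1_2: "matrix_inv (mat 1 :: mat2) = mat 1"
  using inv2_mk2[of 1 1 0 0] by (simp add: mat1_2)

lemma phi_mat1: "phi1 (mat 1) = mat 1" "phi2 (mat 1) = mat 1"
  by (simp_all add: mat1_2 mat1_3)

definition mn :: "mat3 \<Rightarrow> 3 \<Rightarrow> 3 \<Rightarrow> complex" where
  "mn A r s = A$r$1 * A$s$2 - A$s$1 * A$r$2"

lemma unip_inv:
  assumes "N = mk3 1 p q 0 1 r 0 0 1"
  shows "(M ** N)$k$1 = M$k$1" "mn (M ** N) a b = mn M a b"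
proof -
  have e: "(M ** N)$k$1 = M$k$1 \<and> (M ** N)$k$2 = M$k$1 * p + M$k$2" for k
    unfolding assms by (simp add: matrix_matrix_mult_def sum_3)
  show "(M ** N)$k$1 = M$k$1" using e by blast
  have ea: "(M ** N)$a$1 = M$a$1" "(M ** N)$a$2 = M$a$1 * p + M$a$2" using e by blast+
  have eb: "(M ** N)$b$1 = M$b$1" "(M ** N)$b$2 = M$b$1 * p + M$b$2" using e by blast+
  show "mn (M ** N) a b = mn M a b" unfolding mn_def ea eb by (simp add: algebra_simps)
qed

lemma P_formula:
  assumes "det y1 = 1" "det y2 = 1" "det y3 = 1"
  shows "phi2 (matrix_inv y1) ** phi1 (matrix_inv y2) ** phi2 (matrix_inv y3) ** mk3 i 0 0 0 j 0 0 0 k =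
  mk3 (y2$2$2 * i) (- (y2$1$2 * y3$2$2 * j)) (y2$1$2 * y3$1$2 * k)
   (- (y1$2$2 * y2$2$1 * i)) ((y1$2$2 * y2$1$1 * y3$2$2 + y1$1$2 * y3$2$1) * j)
   ((- (y1$2$2 * y2$1$1 * y3$1$2) - y1$1$2 * y3$1$1) * k)
   (y1$2$1 * y2$2$1 * i) ((- (y1$2$1 * y2$1$1 * y3$2$2) - y1$1$1 * y3$2$1) * j)
   ((y1$2$1 * y2$1$1 * y3$1$2 + y1$1$1 * y3$1$1) * k)"
  using assms by (simp add: inv2 phi1_def phi2_def mk3_mult)

lemma Gi_unip: "h \<in> Gamma_inf3 \<Longrightarrow> \<exists>x y z. h = mk3 1 x z 0 1 y 0 0 1"
  unfolding Gamma_inf3_def by blast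

abbreviation FF where
  "FF y1 y2 y3 d u \<equiv> phi2 (matrix_inv y1) ** phi1 (matrix_inv y2) ** phi2 (matrix_inv y3) ** d ** u"

lemma coset_inv:
  assumes det: "a1*d1 - b1*c1 = 1" "a2*d2 - b2*c2 = 1" "a3*d3-b3*c3 = 1"
    and h: "h \<in> Gamma_inf3"
    and X: "X = FF (mk2 a1 b1 c1 d1) (mk2 a2 b2 c2 d2) (mk2 a3 b3 c3 d3) (mk3 i 0 0 0 j 0 0 0 k)
                  (mk3 1 al be 0 1 ga 0 0 1) ** h"
  shows "X$1$1 = d2 * i" "X$2$1 = - (d1 * c2 * i)" "X$3$1 = c1 * c2 * i"
    "mn X 2 3 = i * j * c2 * c3"
    "mn X 1 2 = i * j * (d1 * d3 + b1 * c3 * d2)"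
    "mn X 1 3 = - (i * j * (c1 * d3 + a1 * c3 * d2))"
proof -
  obtain x y z where hh: "h = mk3 1 x z 0 1 y 0 0 1" using Gi_unip[OF h] by blast
  define P where "P = phi2 (matrix_inv (mk2 a1 b1 c1 d1)) ** phi1 (matrix_inv (mk2 a2 b2 c2 d2))
     ** phi2 (matrix_inv (mk2 a3 b3 c3 d3)) ** mk3 i 0 0 0 j 0 0 0 k"
  have XP: "X = P ** mk3 1 al be 0 1 ga 0 0 1 ** h" unfolding X P_def ..
  have c1: "X$r$1 = P$r$1" for r unfolding XP using unip_inv(1)[OF hh] unip_inv(1)[OF refl] by simp
  have c2: "mn X r s = mn P r s" for r s unfolding XP using unip_inv(2)[OF hh] unip_inv(2)[OF refl] by simp
  have PP: "P = mk3 (d2 * i) (- (b2 * d3 * j)) (b2 * b3 * k)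
   (- (d1 * c2 * i)) ((d1 * a2 * d3 + b1 * c3) * j) ((- (d1 * a2 * b3) - b1 * a3) * k)
   (c1 * c2 * i) ((- (c1 * a2 * d3) - a1 * c3) * j) ((c1 * a2 * b3 + a1 * a3) * k)"
    unfolding P_def using det by (simp add: inv2_mk2 mk3_mult)
  show "X$1$1 = d2 * i" "X$2$1 = - (d1 * c2 * i)" "X$3$1 = c1 * c2 * i"
    unfolding c1 unfolding PP by simp_all
  show "mn X 2 3 = i * j * c2 * c3" unfolding c2 unfolding PP mn_def using det(1) by simp algebra
  show "mn X 1 2 = i * j * (d1 * d3 + b1 * c3 * d2)" unfolding c2 unfolding PP mn_def using det(2) by simp algebra
  show "mn X 1 3 = - (i * j * (c1 * d3 + a1 * c3 * d2))" unfolding c2 unfolding PP mn_def using det(2) by simp algebra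
qed

lemma det_SL2: "y \<in> SL2 \<Longrightarrow> det y = 1" unfolding SL2_def by simp

lemma coset_inv_Y:
  assumes det: "det y1 = 1" "det y2 = 1" "det y3 = 1"
    and h: "h \<in> Gamma_inf3"
    and X: "X = FF y1 y2 y3 (mk3 i 0 0 0 j 0 0 0 k) (mk3 1 al be 0 1 ga 0 0 1) ** h"
  shows "X$1$1 = y2$2$2 * i" "X$2$1 = - (y1$2$2 * y2$2$1 * i)" "X$3$1 = y1$2$1 * y2$2$1 * i"
    "mn X 2 3 = i * j * y2$2$1 * y3$2$1"
    "mn X 1 2 = i * j * (y1$2$2 * y3$2$2 + y1$1$2 * y3$2$1 * y2$2$2)"
    "mn X 1 3 = - (i * j * (y1$2$1 * y3$2$2 + y1$1$1 * y3$2$1 * y2$2$2))"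
proof -
  have e1: "mk2 (y1$1$1) (y1$1$2) (y1$2$1) (y1$2$2) = y1" by (rule mat2_eta[symmetric])
  have e2: "mk2 (y2$1$1) (y2$1$2) (y2$2$1) (y2$2$2) = y2" by (rule mat2_eta[symmetric])
  have e3: "mk2 (y3$1$1) (y3$1$2) (y3$2$1) (y3$2$2) = y3" by (rule mat2_eta[symmetric])
  note ci = coset_inv[of "y1$1$1" "y1$2$2" "y1$1$2" "y1$2$1" "y2$1$1" "y2$2$2" "y2$1$2" "y2$2$1"
     "y3$1$1" "y3$2$2" "y3$1$2" "y3$2$1" h X i j k al be ga, unfolded e1 e2 e3]
  have d': "y1$1$1 * y1$2$2 - y1$1$2 * y1$2$1 = 1" "y2$1$1 * y2$2$2 - y2$1$2 * y2$2$1 = 1"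
     "y3$1$1 * y3$2$2 - y3$1$2 * y3$2$1 = 1" using det by (simp_all add: det_2)
  show "X$1$1 = y2$2$2 * i" "X$2$1 = - (y1$2$2 * y2$2$1 * i)" "X$3$1 = y1$2$1 * y2$2$1 * i"
    "mn X 2 3 = i * j * y2$2$1 * y3$2$1"
    "mn X 1 2 = i * j * (y1$2$2 * y3$2$2 + y1$1$2 * y3$2$1 * y2$2$2)"
    "mn X 1 3 = - (i * j * (y1$2$1 * y3$2$2 + y1$1$1 * y3$2$1 * y2$2$2))"
    using ci[OF d' h X] by auto
qed

lemma D3_elim: "d \<in> D3 \<Longrightarrow> \<exists>i j k. i \<in> ZO \<and> j \<in> ZO \<and> k \<in> ZO \<and> i*j*k = 1 \<and> d = mk3 i 0 0 0 j 0 0 0 k"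
  unfolding D3_def by blast

lemma R3_ZO: "r \<in> R3 \<Longrightarrow> r \<in> ZO"
proof -
  assume "r \<in> R3"
  then obtain m n :: nat where "r = of_nat m + of_nat n * omega" unfolding R3_def by blast
  hence "r = of_int (int m) + of_int (int n) * omega" by simp
  thus ?thesis unfolding ZO_iff by blast
qed

lemma U3_elim: "u \<in> U3 \<Longrightarrow> \<exists>al be ga. al \<in> R3 \<and> be \<in> R3 \<and> ga \<in> R3 \<and> u = mk3 1 al be 0 1 ga 0 0 1"
  unfolding U3_def by blast

lemma D3_SL3: "d \<in> D3 \<Longrightarrow> d \<in> SL3"
  using D3_elim[of d] by (auto simp: SL3_mk3 mult.assoc)

lemma U3_SL3: "u \<in> U3 \<Longrightarrow> u \<in> SL3"
  using U3_elim[of u] R3_ZO by (auto simp: SL3_mk3)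

lemma Gi_SL3: "h \<in> Gamma_inf3 \<Longrightarrow> h \<in> SL3"
  unfolding Gamma_inf3_def Gamma3_def by auto

lemma phi_inv_SL3: assumes "y \<in> SL2"
  shows "phi2 (matrix_inv y) \<in> SL3" "phi1 (matrix_inv y) \<in> SL3"
  using assms by (auto simp: inv2 det_SL2 phi1_def phi2_def SL3_mk3 SL2_iff algebra_simps)

lemma T2:
  assumes vr: "valid_reps C Rep" and Y: "y1 \<in> Yset C Rep" "y2 \<in> Yset C Rep" "y3 \<in> Yset C Rep"
    and d: "d \<in> D3" and u: "u \<in> U3" and X: "X \<in> coset3 (FF y1 y2 y3 d u)"
  shows "X \<in> SL3" "X \<in> Delta2 \<longleftrightarrow> y2 = mat 1" "X \<in> Delta11 \<longleftrightarrow> y2 \<noteq> mat 1 \<and> y3 \<noteq> mat 1"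
proof -
  obtain h where h: "h \<in> Gamma_inf3" "X = FF y1 y2 y3 d u ** h" using X unfolding coset3_def by blast
  have S: "y1 \<in> SL2" "y2 \<in> SL2" "y3 \<in> SL2" using Y Y_SL2 by blast+
  show XS: "X \<in> SL3" unfolding h(2)
    by (intro SL3_mult phi_inv_SL3 S D3_SL3 d U3_SL3 u Gi_SL3 h(1))
  obtain i j k where ijk: "i \<in> ZO" "j \<in> ZO" "k \<in> ZO" "i*j*k = 1" "d = mk3 i 0 0 0 j 0 0 0 k"
    using D3_elim[OF d] by blast
  obtain al be ga where u': "u = mk3 1 al be 0 1 ga 0 0 1" using U3_elim[OF u] by blast
  note F = coset_inv_Y[OF det_SL2[OF S(1)] det_SL2[OF S(2)] det_SL2[OF S(3)] h(1) h(2)[unfolded ijk(5) u']]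
  have i0: "i \<noteq> 0" "j \<noteq> 0" using ijk(4) by auto
  have cd1: "y1$2$1 \<noteq> 0 \<or> y1$2$2 \<noteq> 0" using S(1) unfolding SL2_iff by auto
  have "X \<in> Delta2 \<longleftrightarrow> y2$2$1 = 0"
    unfolding Delta2_def using XS F(2,3) i0 cd1 by auto
  thus "X \<in> Delta2 \<longleftrightarrow> y2 = mat 1" using Y_c0_iff[OF vr Y(2)] by simp
  have "X \<in> Delta11 \<longleftrightarrow> y2$2$1 \<noteq> 0 \<and> y3$2$1 \<noteq> 0"
    unfolding Delta11_def using XS F(4) i0 unfolding mn_def by auto
  thus "X \<in> Delta11 \<longleftrightarrow> y2 \<noteq> mat 1 \<and> y3 \<noteq> mat 1" using Y_c0_iff[OF vr Y(2)] Y_c0_iff[OF vr Y(3)] by simp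
qed

lemma ZO_lin_indep: "of_int p + of_int q * omega = (0::complex) \<Longrightarrow> p = 0 \<and> q = 0"
proof -
  assume h: "of_int p + of_int q * omega = (0::complex)"
  have "Im (of_int p + of_int q * omega) = of_int q * (sqrt 3 / 2)" by simp
  hence q: "q = 0" using h by simp
  thus ?thesis using h by simp
qed

lemma R3_unique:
  assumes "r \<in> R3" "r' \<in> R3" "w \<in> ZO" "r - r' = 3 * w"
  shows "r = r'"
proof -
  obtain m n :: nat where r: "r = of_nat m + of_nat n * omega" "m < 3" "n < 3" using assms(1) unfolding R3_def by blast
  obtain m' n' :: nat where r': "r' = of_nat m' + of_nat n' * omega" "m' < 3" "n' < 3" using assms(2) unfolding R3_def by blast
  obtain a b where w: "w = of_int a + of_int b * omega" using assms(3) unfolding ZO_iff by blast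
  have "of_int (int m - int m' - 3*a) + of_int (int n - int n' - 3*b) * omega = (0::complex)"
    using assms(4) unfolding r r' w by (simp add: algebra_simps)
  hence "int m - int m' - 3*a = 0" "int n - int n' - 3*b = 0" using ZO_lin_indep by blast+
  hence "m = m'" "n = n'" using r(2,3) r'(2,3) by presburger+
  thus ?thesis using r r' by simp
qed

lemma R3_exists:
  assumes "z \<in> ZO" shows "\<exists>r\<in>R3. \<exists>w\<in>ZO. z - r = 3 * w"
proof -
  obtain a b where z: "z = of_int a + of_int b * omega" using assms unfolding ZO_iff by blast
  define r where "r = of_nat (nat (a mod 3)) + of_nat (nat (b mod 3)) * (omega::complex)"
  define w where "w = of_int (a div 3) + of_int (b div 3) * (omega::complex)"
  have rR: "r \<in> R3" unfolding r_def R3_def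
    by (rule CollectI, rule exI[of _ "nat (a mod 3)"], rule exI[of _ "nat (b mod 3)"]) auto
  have wZ: "w \<in> ZO" unfolding w_def ZO_iff by blast
  have ra: "of_nat (nat (a mod 3)) = (of_int (a mod 3) :: complex)" by simp
  have rb: "of_nat (nat (b mod 3)) = (of_int (b mod 3) :: complex)" by simp
  have "a = 3 * (a div 3) + a mod 3" "b = 3 * (b div 3) + b mod 3" by simp_all
  hence "(of_int a :: complex) = 3 * of_int (a div 3) + of_int (a mod 3)"
        "(of_int b :: complex) = 3 * of_int (b div 3) + of_int (b mod 3)"
    by (metis of_int_add of_int_mult of_int_numeral)+
  hence "z - r = 3 * w" unfolding z r_def w_def ra rb by (simp add: algebra_simps)
  thus ?thesis using rR wZ by blast
qed

lemma vr_parts: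
  assumes "valid_reps C Rep"
  shows "C \<subseteq> ZO - {0}"
    "\<And>x. x \<in> ZO - {0} \<Longrightarrow> \<exists>!c. c \<in> C \<and> (\<exists>u \<in> ZO_units. x = u * c)"
    "\<And>c x. c \<in> C \<Longrightarrow> x \<in> ZO \<Longrightarrow> \<exists>!a. a \<in> Rep c \<and> (\<exists>z \<in> ZO. x - a = c * z)"
    "\<And>c. c \<in> C \<Longrightarrow> Rep c \<subseteq> ZO"
proof -
  have A: "C \<subseteq> ZO - {0} \<and>
     (\<forall>x \<in> ZO - {0}. \<exists>!c. c \<in> C \<and> (\<exists>u \<in> ZO_units. x = u * c)) \<and>
     (\<forall>c \<in> C. Rep c \<subseteq> ZO \<and> (\<forall>x \<in> ZO. \<exists>!a. a \<in> Rep c \<and> (\<exists>z \<in> ZO. x - a = c * z)))"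
    using assms unfolding valid_reps_def .
  show "C \<subseteq> ZO - {0}" using conjunct1[OF A] .
  show "\<And>x. x \<in> ZO - {0} \<Longrightarrow> \<exists>!c. c \<in> C \<and> (\<exists>u \<in> ZO_units. x = u * c)"
    using conjunct1[OF conjunct2[OF A]] by (rule bspec)
  fix c assume c: "c \<in> C"
  have B: "Rep c \<subseteq> ZO \<and> (\<forall>x \<in> ZO. \<exists>!a. a \<in> Rep c \<and> (\<exists>z \<in> ZO. x - a = c * z))"
    using conjunct2[OF conjunct2[OF A]] c by (rule bspec)
  show "Rep c \<subseteq> ZO" using conjunct1[OF B] .
  fix x assume "x \<in> ZO"
  show "\<exists>!a. a \<in> Rep c \<and> (\<exists>z \<in> ZO. x - a = c * z)"
    using conjunct2[OF B] \<open>x \<in> ZO\<close> by (rule bspec)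
qed

lemma cop_row: "y \<in> SL2 \<Longrightarrow> cop (y$2$1) (y$2$2)"
  unfolding cop_def SL2_iff
  by (rule bexI[of _ "- y$1$2"], rule bexI[of _ "y$1$1"]) (auto simp: algebra_simps)

lemma Y_eq:
  assumes vr: "valid_reps C Rep" and Y: "y \<in> Yset C Rep" "y' \<in> Yset C Rep"
    and c: "y$2$1 = y'$2$1" and d: "y$2$2 = y'$2$2"
  shows "y = y'"
proof (cases "y$2$1 = 0")
  case True
  then show ?thesis using Y_c0[OF vr Y(1)] Y_c0[OF vr Y(2)] c by simp
next
  case False
  have ny: "y \<noteq> mat 1" "y' \<noteq> mat 1" using False c by (auto simp: mat1_2)
  have cC: "y$2$1 \<in> C" and aR: "y$1$1 \<in> Rep (y$2$1)" and aR': "y'$1$1 \<in> Rep (y$2$1)"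
    using Y_nonI[OF Y(1) ny(1)] Y_nonI[OF Y(2) ny(2)] c by auto
  have S: "y \<in> SL2" "y' \<in> SL2" using Y Y_SL2 by blast+
  have Z: "y$1$1 \<in> ZO" "y$1$2 \<in> ZO" "y$2$1 \<in> ZO" "y$2$2 \<in> ZO" "y'$1$1 \<in> ZO" "y'$1$2 \<in> ZO"
    and det: "y$1$1 * y$2$2 - y$1$2 * y$2$1 = 1" "y'$1$1 * y'$2$2 - y'$1$2 * y'$2$1 = 1"
    using S unfolding SL2_iff by auto
  have "(y$1$1 - y'$1$1) * y$2$2 = y$2$1 * (y$1$2 - y'$1$2)"
    using det c d by (simp add: algebra_simps)
  then obtain z where z: "z \<in> ZO" "y$1$1 - y'$1$1 = y$2$1 * z"
    using cop_div[of "y$2$1" "y$2$2" "y$1$1 - y'$1$1" "y$1$2 - y'$1$2"] Z cop_row[OF S(1)] by auto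
  have rep: "\<exists>!a. a \<in> Rep (y$2$1) \<and> (\<exists>z\<in>ZO. y$1$1 - a = y$2$1 * z)"
    using vr_parts(3)[OF vr cC Z(1)] .
  have P1: "y$1$1 \<in> Rep (y$2$1) \<and> (\<exists>z\<in>ZO. y$1$1 - y$1$1 = y$2$1 * z)"
    using aR by (auto intro!: bexI[of _ 0])
  have P2: "y'$1$1 \<in> Rep (y$2$1) \<and> (\<exists>z\<in>ZO. y$1$1 - y'$1$1 = y$2$1 * z)"
    using aR' z by blast
  have a: "y$1$1 = y'$1$1"
    using rep P1 P2 by blast
  have "y$1$2 * y$2$1 = y'$1$2 * y$2$1" using det a c d by (simp add: algebra_simps)
  hence b: "y$1$2 = y'$1$2" using False by simp
  show ?thesis by (subst mat2_eta, subst (2) mat2_eta) (simp add: a b c d)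
qed

lemma Y_unit:
  assumes vr: "valid_reps C Rep" and Y: "y \<in> Yset C Rep" "y' \<in> Yset C Rep"
    and ne: "y$2$1 \<noteq> 0" and st: "s \<in> ZO" "t \<in> ZO" "s * t = 1" and e: "y'$2$1 = s * y$2$1"
  shows "s = 1"
proof -
  have s0: "s \<noteq> 0" using st(3) by auto
  have ne': "y'$2$1 \<noteq> 0" unfolding e using ne s0 by simp
  have ny: "y \<noteq> mat 1" using ne by (auto simp: mat1_2)
  have ny': "y' \<noteq> mat 1" using ne' by (auto simp: mat1_2)
  have C1: "y$2$1 \<in> C" using Y_nonI[OF Y(1) ny] by blast
  have C2: "y'$2$1 \<in> C" using Y_nonI[OF Y(2) ny'] by blast
  have Z: "y'$2$1 \<in> ZO" using Y_SL2[OF Y(2)] unfolding SL2_iff by blast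
  have u: "\<exists>!c. c \<in> C \<and> (\<exists>u\<in>ZO_units. y'$2$1 = u * c)"
    using vr_parts(2)[OF vr] Z ne' by simp
  have su: "s \<in> ZO_units" unfolding ZO_units_def using st by blast
  have 1: "(1::complex) \<in> ZO_units" unfolding ZO_units_def by (simp add: bexI[of _ 1])
  define Q where "Q c \<longleftrightarrow> c \<in> C \<and> (\<exists>u\<in>ZO_units. y'$2$1 = u * c)" for c
  have P1: "Q (y$2$1)" unfolding Q_def using C1 e su by blast
  have "y'$2$1 = 1 * y'$2$1" by simp
  hence P2: "Q (y'$2$1)" unfolding Q_def using C2 1 by blast
  have u': "\<exists>!c. Q c" unfolding Q_def by (rule u)
  obtain c0 where c0: "\<And>c. Q c \<Longrightarrow> c = c0" using u' unfolding Ex1_def by blast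
  have "y$2$1 = y'$2$1" using c0[OF P1] c0[OF P2] by simp
  hence "s * y$2$1 = 1 * y$2$1" using e by simp
  thus ?thesis using ne by (simp only: mult_cancel_right) simp
qed

lemma pair_step:
  assumes vr: "valid_reps C Rep" and Y: "y \<in> Yset C Rep" "y' \<in> Yset C Rep"
    and e: "y$2$1 * y'$2$2 = y'$2$1 * y$2$2"
  shows "y = y'"
proof -
  have S: "y \<in> SL2" "y' \<in> SL2" using Y Y_SL2 by blast+
  have Z: "y$2$1 \<in> ZO" "y$2$2 \<in> ZO" "y'$2$1 \<in> ZO" "y'$2$2 \<in> ZO" using S unfolding SL2_iff by auto
  obtain s t where st: "s \<in> ZO" "t \<in> ZO" "s * t = 1" "y'$2$1 = s * y$2$1" "y'$2$2 = s * y$2$2"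
    using cop_assoc[OF Z cop_row[OF S(1)] cop_row[OF S(2)] e] by blast
  show ?thesis
  proof (cases "y$2$1 = 0")
    case True
    hence "y'$2$1 = 0" using st(4) by simp
    thus ?thesis using True Y_c0[OF vr Y(1)] Y_c0[OF vr Y(2)] by simp
  next
    case False
    have "s = 1" using Y_unit[OF vr Y False st(1-4)] .
    thus ?thesis using Y_eq[OF vr Y] st(4,5) by simp
  qed
qed

lemma unit_step:
  assumes vr: "valid_reps C Rep" and Y: "y \<in> Yset C Rep" "y' \<in> Yset C Rep"
    and i: "i \<noteq> 0" "i' \<noteq> 0"
    and e1: "y$2$1 * i = y'$2$1 * i'" and e2: "y$2$2 * i = y'$2$2 * i'"
  shows "y = y' \<and> i = i'"
proof -
  have "(y$2$1 * y'$2$2) * i' = (y'$2$1 * y$2$2) * i'"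
  proof -
    have "(y$2$1 * y'$2$2) * i' = y$2$1 * (y$2$2 * i)" using e2 by (simp add: mult.assoc)
    also have "\<dots> = (y$2$1 * i) * y$2$2" by (simp add: algebra_simps)
    also have "\<dots> = (y'$2$1 * y$2$2) * i'" using e1 by (simp add: algebra_simps)
    finally show ?thesis .
  qed
  hence "y$2$1 * y'$2$2 = y'$2$1 * y$2$2" using i(2) by simp
  hence yy: "y = y'" using pair_step[OF vr Y] by blast
  have S: "y \<in> SL2" using Y Y_SL2 by blast
  have "y$2$1 \<noteq> 0 \<or> y$2$2 \<noteq> 0" using S unfolding SL2_iff by auto
  hence "i = i'" using e1 e2 unfolding yy by auto
  thus ?thesis using yy by blast
qed

lemma Gi_form: "h \<in> Gamma_inf3 \<Longrightarrow>
  \<exists>x y z. x \<in> ZO \<and> y \<in> ZO \<and> z \<in> ZO \<and> h = mk3 1 (3*x) (3*z) 0 1 (3*y) 0 0 1"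
proof -
  assume h: "h \<in> Gamma_inf3"
  obtain a b c where hh: "h = mk3 1 a c 0 1 b 0 0 1" using Gi_unip[OF h] by blast
  have G: "\<forall>i j. \<exists>z \<in> ZO. h $ i $ j - (mat 1 :: mat3) $ i $ j = 3 * z"
    using h unfolding Gamma_inf3_def Gamma3_def by blast
  obtain x where x: "x \<in> ZO" "a = 3 * x" using G[rule_format, of 1 2] unfolding hh mat1_3 by auto
  obtain y where y: "y \<in> ZO" "b = 3 * y" using G[rule_format, of 2 3] unfolding hh mat1_3 by auto
  obtain z where z: "z \<in> ZO" "c = 3 * z" using G[rule_format, of 1 3] unfolding hh mat1_3 by auto
  show ?thesis using x y z hh by blast
qed

lemma unip_cancel:
  assumes R: "al \<in> R3" "be \<in> R3" "ga \<in> R3" "al' \<in> R3" "be' \<in> R3" "ga' \<in> R3"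
    and h: "h \<in> Gamma_inf3" "h' \<in> Gamma_inf3"
    and e: "mk3 1 al be 0 1 ga 0 0 1 ** h = mk3 1 al' be' 0 1 ga' 0 0 1 ** h'"
  shows "al = al' \<and> be = be' \<and> ga = ga'"
proof -
  obtain x y z where hh: "x \<in> ZO" "y \<in> ZO" "z \<in> ZO" "h = mk3 1 (3*x) (3*z) 0 1 (3*y) 0 0 1"
    using Gi_form[OF h(1)] by blast
  obtain x' y' z' where hh': "x' \<in> ZO" "y' \<in> ZO" "z' \<in> ZO" "h' = mk3 1 (3*x') (3*z') 0 1 (3*y') 0 0 1"
    using Gi_form[OF h(2)] by blast
  have eqs: "3*x + al = 3*x' + al'" "3*z + al*(3*y) + be = 3*z' + al'*(3*y') + be'" "3*y + ga = 3*y' + ga'"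
    using e unfolding hh(4) hh'(4) by (simp_all add: mk3_mult mk3_eq_iff)
  have a: "al = al'"
    by (rule R3_unique[OF R(1,4), of "x' - x"]) (use eqs(1) hh hh' in \<open>auto simp: algebra_simps\<close>)
  have g: "ga = ga'"
    by (rule R3_unique[OF R(3,6), of "y' - y"]) (use eqs(3) hh hh' in \<open>auto simp: algebra_simps\<close>)
  have "be - be' = 3 * (z' - z + al * (y' - y))" using eqs(2) a by (simp add: algebra_simps)
  hence b: "be = be'"
    by (intro R3_unique[OF R(2,5), of "z' - z + al * (y' - y)"]) (use hh hh' R3_ZO[OF R(1)] in auto)
  show ?thesis using a b g by blast
qed

lemma T3:
  assumes vr: "valid_reps C Rep"
    and Y: "y1 \<in> Yset C Rep" "y2 \<in> Yset C Rep" "y3 \<in> Yset C Rep"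
    and Y': "y1' \<in> Yset C Rep" "y2' \<in> Yset C Rep" "y3' \<in> Yset C Rep"
    and S: "y2 = mat 1 \<longrightarrow> y1 = mat 1" "y2' = mat 1 \<longrightarrow> y1' = mat 1"
    and d: "d \<in> D3" "d' \<in> D3" and u: "u \<in> U3" "u' \<in> U3"
    and X: "X \<in> coset3 (FF y1 y2 y3 d u)" "X \<in> coset3 (FF y1' y2' y3' d' u')"
  shows "y1 = y1' \<and> y2 = y2' \<and> y3 = y3' \<and> d = d' \<and> u = u'"
proof -
  obtain h where h: "h \<in> Gamma_inf3" "X = FF y1 y2 y3 d u ** h" using X(1) unfolding coset3_def by blast
  obtain h' where h': "h' \<in> Gamma_inf3" "X = FF y1' y2' y3' d' u' ** h'" using X(2) unfolding coset3_def by blast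
  have SL: "y1 \<in> SL2" "y2 \<in> SL2" "y3 \<in> SL2" "y1' \<in> SL2" "y2' \<in> SL2" "y3' \<in> SL2"
    using Y Y' Y_SL2 by blast+
  obtain i j k where ijk: "i \<in> ZO" "j \<in> ZO" "k \<in> ZO" "i*j*k = 1" "d = mk3 i 0 0 0 j 0 0 0 k"
    using D3_elim[OF d(1)] by blast
  obtain i' j' k' where ijk': "i' \<in> ZO" "j' \<in> ZO" "k' \<in> ZO" "i'*j'*k' = 1" "d' = mk3 i' 0 0 0 j' 0 0 0 k'"
    using D3_elim[OF d(2)] by blast
  obtain al be ga where uu: "al \<in> R3" "be \<in> R3" "ga \<in> R3" "u = mk3 1 al be 0 1 ga 0 0 1" using U3_elim[OF u(1)] by blast
  obtain al' be' ga' where uu': "al' \<in> R3" "be' \<in> R3" "ga' \<in> R3" "u' = mk3 1 al' be' 0 1 ga' 0 0 1" using U3_elim[OF u(2)] by blast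
  note F = coset_inv_Y[OF det_SL2[OF SL(1)] det_SL2[OF SL(2)] det_SL2[OF SL(3)] h(1) h(2)[unfolded ijk(5) uu(4)]]
  note F' = coset_inv_Y[OF det_SL2[OF SL(4)] det_SL2[OF SL(5)] det_SL2[OF SL(6)] h'(1) h'(2)[unfolded ijk'(5) uu'(4)]]
  have i0: "i \<noteq> 0" "j \<noteq> 0" "i' \<noteq> 0" "j' \<noteq> 0" using ijk(4) ijk'(4) by auto
  have dt: "y1$1$1 * y1$2$2 - y1$1$2 * y1$2$1 = 1" "y2$1$1 * y2$2$2 - y2$1$2 * y2$2$1 = 1"
           "y3$1$1 * y3$2$2 - y3$1$2 * y3$2$1 = 1"
           "y1'$1$1 * y1'$2$2 - y1'$1$2 * y1'$2$1 = 1" "y2'$1$1 * y2'$2$2 - y2'$1$2 * y2'$2$1 = 1"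
           "y3'$1$1 * y3'$2$2 - y3'$1$2 * y3'$2$1 = 1"
    using SL unfolding SL2_iff by auto
  have E1: "y2$2$2 * i = y2'$2$2 * i'" using F(1) F'(1) by simp
  have E2: "y1$2$2 * y2$2$1 * i = y1'$2$2 * y2'$2$1 * i'" using F(2) F'(2) by simp
  have E3: "y1$2$1 * y2$2$1 * i = y1'$2$1 * y2'$2$1 * i'" using F(3) F'(3) by simp
  have E4: "i * j * y2$2$1 * y3$2$1 = i' * j' * y2'$2$1 * y3'$2$1" using F(4) F'(4) by simp
  have E5: "i * j * (y1$2$2 * y3$2$2 + y1$1$2 * y3$2$1 * y2$2$2) = i' * j' * (y1'$2$2 * y3'$2$2 + y1'$1$2 * y3'$2$1 * y2'$2$2)"
    using F(5) F'(5) by simp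
  have E6: "i * j * (y1$2$1 * y3$2$2 + y1$1$1 * y3$2$1 * y2$2$2) = i' * j' * (y1'$2$1 * y3'$2$2 + y1'$1$1 * y3'$2$1 * y2'$2$2)"
    using F(6) F'(6) by simp
  have nz1: "y1$2$1 \<noteq> 0 \<or> y1$2$2 \<noteq> 0" "y1'$2$1 \<noteq> 0 \<or> y1'$2$2 \<noteq> 0"
    using dt(1,4) by auto
  have A: "y1 = y1' \<and> y2 = y2' \<and> i = i'"
  proof (cases "y2$2$1 = 0")
    case True
    have "y1'$2$2 * y2'$2$1 * i' = 0" "y1'$2$1 * y2'$2$1 * i' = 0" using E2 E3 True by simp_all
    hence c2': "y2'$2$1 = 0" using nz1(2) i0(3) by auto
    have y2: "y2 = mat 1" "y2' = mat 1" using Y_c0[OF vr Y(2) True] Y_c0[OF vr Y'(2) c2'] .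
    have "i = i'" using E1 unfolding y2 mat1_2 by simp
    thus ?thesis using y2 S by simp
  next
    case False
    have "(y2$2$1 * i) * (y1$2$1 * y1'$2$2 - y1'$2$1 * y1$2$2) = 0"
      using E2 E3 by algebra
    hence "y1$2$1 * y1'$2$2 = y1'$2$1 * y1$2$2" using False i0(1) by simp
    hence y1: "y1 = y1'" using pair_step[OF vr Y(1) Y'(1)] by blast
    have "y1$2$2 * (y2$2$1 * i - y2'$2$1 * i') = 0" "y1$2$1 * (y2$2$1 * i - y2'$2$1 * i') = 0"
      using E2 E3 unfolding y1 by (simp_all add: algebra_simps)
    hence "y2$2$1 * i = y2'$2$1 * i'" using nz1(1) by auto
    hence "y2 = y2' \<and> i = i'" using unit_step[OF vr Y(2) Y'(2) i0(1,3) _ E1] by blast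
    thus ?thesis using y1 by blast
  qed
  hence y1: "y1' = y1" and y2: "y2' = y2" and ii: "i' = i" by auto
  define U where "U = j * y3$2$1 - j' * y3'$2$1"
  define V where "V = j * y3$2$2 - j' * y3'$2$2"
  have E5': "i * (y1$2$2 * V + y1$1$2 * y2$2$2 * U) = 0" using E5 unfolding y1 y2 ii U_def V_def by algebra
  have E6': "i * (y1$2$1 * V + y1$1$1 * y2$2$2 * U) = 0" using E6 unfolding y1 y2 ii U_def V_def by algebra
  have E5'': "y1$2$2 * V + y1$1$2 * y2$2$2 * U = 0" using E5' i0(1) by simp
  have E6'': "y1$2$1 * V + y1$1$1 * y2$2$2 * U = 0" using E6' i0(1) by simp
  have V0: "V = 0" using E5'' E6'' dt(1) by algebra
  have dU: "y2$2$2 * U = 0" using E5'' E6'' dt(1) V0 by algebra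
  have "i * (y2$2$1 * U) = 0" using E4 unfolding y2 ii U_def by algebra
  hence cU: "y2$2$1 * U = 0" using i0(1) by simp
  have U0: "U = 0" using dU cU dt(2) by algebra
  have "y3 = y3' \<and> j = j'"
    using unit_step[OF vr Y(3) Y'(3) i0(2,4)] U0 V0 unfolding U_def V_def by (simp add: algebra_simps)
  hence y3: "y3' = y3" and jj: "j' = j" by auto
  have "(i*j) * k' = (i*j) * k" using ijk(4) ijk'(4) unfolding ii jj by simp
  hence "k' = k" using i0(1,2) by simp
  hence dd: "d' = d" unfolding ijk(5) ijk'(5) ii jj by simp
  define P where "P = phi2 (matrix_inv y1) ** phi1 (matrix_inv y2) ** phi2 (matrix_inv y3) ** d"
  have PS: "P \<in> SL3" unfolding P_def
    by (intro SL3_mult phi_inv_SL3 SL D3_SL3 d)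
  hence "det P \<noteq> 0" unfolding SL3_def by simp
  hence "invertible P" using invertible_det_nz by blast
  then obtain Q where Q: "Q ** P = mat 1" unfolding invertible_def by blast
  have "P ** (u ** h) = P ** (u' ** h')"
    using h(2) h'(2) unfolding P_def y1 y2 y3 dd by (simp add: matrix_mul_assoc)
  hence "Q ** (P ** (u ** h)) = Q ** (P ** (u' ** h'))" by simp
  hence "u ** h = u' ** h'" by (simp add: matrix_mul_assoc Q matrix_mul_lid)
  hence "al = al' \<and> be = be' \<and> ga = ga'"
    using unip_cancel[OF uu(1-3) uu'(1-3) h(1) h'(1)] unfolding uu(4) uu'(4) by blast
  hence "u = u'" unfolding uu(4) uu'(4) by simp
  thus ?thesis using y1 y2 y3 dd by simp
qed

lemma Y_exists:
  assumes vr: "valid_reps C Rep" and Z: "c0 \<in> ZO" "d0 \<in> ZO" and ne: "c0 \<noteq> 0" and cp: "cop c0 d0"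
  shows "\<exists>y\<in>Yset C Rep. y \<noteq> mat 1 \<and> (\<exists>s\<in>ZO. y$2$1 = s * c0 \<and> y$2$2 = s * d0)"
proof -
  have "\<exists>!c. c \<in> C \<and> (\<exists>u\<in>ZO_units. c0 = u * c)" using vr_parts(2)[OF vr] Z(1) ne by simp
  then obtain c u where cu: "c \<in> C" "u \<in> ZO_units" "c0 = u * c" by blast
  obtain v where v: "u \<in> ZO" "v \<in> ZO" "u * v = 1" using cu(2) unfolding ZO_units_def by blast
  have c: "c = v * c0" using cu(3) v(3) by (simp add: algebra_simps)
  define d where "d = v * d0"
  obtain p q where pq: "p \<in> ZO" "q \<in> ZO" "p * c0 + q * d0 = 1" using cp unfolding cop_def by blast
  have pq': "(p * u) * c + (q * u) * d = 1"
  proof -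
    have "(p * u) * c + (q * u) * d = (u * v) * (p * c0 + q * d0)" unfolding c d_def by (simp add: algebra_simps)
    thus ?thesis using v(3) pq(3) by simp
  qed
  have cZ: "c \<in> ZO" and dZ: "d \<in> ZO" unfolding c d_def using v Z by auto
  have c0': "c \<noteq> 0" using cu(3) ne by auto
  have "\<exists>!a. a \<in> Rep c \<and> (\<exists>z \<in> ZO. q * u - a = c * z)"
    using vr_parts(3)[OF vr cu(1)] pq(2) v(1) by simp
  then obtain a z where az: "a \<in> Rep c" "z \<in> ZO" "q * u - a = c * z" by blast
  have aZ: "a \<in> ZO" using vr_parts(4)[OF vr cu(1)] az(1) by blast
  define b where "b = - (p * u + z * d)"
  have bZ: "b \<in> ZO" unfolding b_def using pq v az dZ by auto
  have det: "a * d - b * c = 1"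
  proof -
    have "a = q * u - c * z" using az(3) by (simp add: algebra_simps)
    hence "a * d - b * c = (p * u) * c + (q * u) * d" unfolding b_def by algebra
    thus ?thesis using pq' by simp
  qed
  define y where "y = mk2 a b c d"
  have yS: "y \<in> SL2" unfolding y_def SL2_iff using aZ bZ cZ dZ det by simp
  have yY: "y \<in> Yset C Rep" unfolding Yset_def using yS cu(1) az(1) unfolding y_def by simp
  have yI: "y \<noteq> mat 1" unfolding y_def mat1_2 mk2_eq_iff using c0' by simp
  have "y$2$1 = v * c0 \<and> y$2$2 = v * d0" unfolding y_def c d_def by simp
  thus ?thesis using yY yI v(2) by blast
qed

lemma phi_SL3: assumes "y \<in> SL2"
  shows "phi2 y \<in> SL3" "phi1 y \<in> SL3"
  using assms by (auto simp: phi1_def phi2_def SL3_mk3 SL2_iff algebra_simps)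

lemma phi_cancel: assumes "y \<in> SL2"
  shows "phi2 (matrix_inv y) ** phi2 y = mat 1" "phi1 (matrix_inv y) ** phi1 y = mat 1"
  using assms by (auto simp: inv2 det_SL2 phi1_def phi2_def mk3_mult mat1_3 SL2_iff algebra_simps)

lemma upper_decomp:
  assumes T: "T \<in> SL3" "T$2$1 = 0" "T$3$1 = 0" "T$3$2 = 0"
  shows "\<exists>d\<in>D3. \<exists>u\<in>U3. \<exists>h\<in>Gamma_inf3. T = d ** u ** h"
proof -
  have Z: "T$1$1 \<in> ZO" "T$1$2 \<in> ZO" "T$1$3 \<in> ZO" "T$2$2 \<in> ZO" "T$2$3 \<in> ZO" "T$3$3 \<in> ZO"
    using T(1) unfolding SL3_def by auto
  have dt: "T$1$1 * T$2$2 * T$3$3 = 1"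
    using T unfolding SL3_def by (simp add: det_3)
  define n12 where "n12 = T$1$2 * (T$2$2 * T$3$3)"
  define n13 where "n13 = T$1$3 * (T$2$2 * T$3$3)"
  define n23 where "n23 = T$2$3 * (T$1$1 * T$3$3)"
  have nZ: "n12 \<in> ZO" "n13 \<in> ZO" "n23 \<in> ZO" unfolding n12_def n13_def n23_def using Z by auto
  obtain al w1 where a: "al \<in> R3" "w1 \<in> ZO" "n12 - al = 3 * w1" using R3_exists[OF nZ(1)] by blast
  obtain ga w2 where g: "ga \<in> R3" "w2 \<in> ZO" "n23 - ga = 3 * w2" using R3_exists[OF nZ(3)] by blast
  have "n13 - al * (3 * w2) \<in> ZO" using nZ a g R3_ZO by auto
  then obtain be w3 where b: "be \<in> R3" "w3 \<in> ZO" "n13 - al * (3 * w2) - be = 3 * w3"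
    using R3_exists by blast
  define d where "d = mk3 (T$1$1) 0 0 0 (T$2$2) 0 0 0 (T$3$3)"
  define u where "u = mk3 1 al be 0 1 ga 0 0 1"
  define h where "h = mk3 1 (3*w1) (3*w3) 0 1 (3*w2) 0 0 1"
  have dD: "d \<in> D3" unfolding d_def D3_def using Z dt by blast
  have uU: "u \<in> U3" unfolding u_def U3_def using a g b by blast
  have hS: "h \<in> SL3" unfolding h_def SL3_mk3 using a g b by auto
  have hG: "h \<in> Gamma3" unfolding Gamma3_def using hS
    by (simp add: h_def mat1_3 forall_3) (use a g b in \<open>auto intro: bexI[of _ 0]\<close>)
  have hGi: "h \<in> Gamma_inf3" unfolding Gamma_inf3_def using hG h_def by blast
  have "d ** u ** h = mk3 (T$1$1) (T$1$1 * n12) (T$1$1 * n13) 0 (T$2$2) (T$2$2 * n23) 0 0 (T$3$3)"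
    unfolding d_def u_def h_def using a(3) g(3) b(3) by (simp add: mk3_mult mk3_eq_iff algebra_simps)
  also have "\<dots> = T"
  proof -
    have "T$1$1 * n12 = (T$1$1 * T$2$2 * T$3$3) * T$1$2" unfolding n12_def by (simp add: algebra_simps)
    moreover have "T$1$1 * n13 = (T$1$1 * T$2$2 * T$3$3) * T$1$3" unfolding n13_def by (simp add: algebra_simps)
    moreover have "T$2$2 * n23 = (T$1$1 * T$2$2 * T$3$3) * T$2$3" unfolding n23_def by (simp add: algebra_simps)
    ultimately show ?thesis using dt T(2-4) by (subst (5) mat3_eta) simp
  qed
  finally show ?thesis using dD uU hGi by metis
qed

lemma phi2_mult_entries:
  "(phi2 y ** X)$1$j = X$1$j" "(phi2 y ** X)$2$j = y$1$1 * X$2$j + y$1$2 * X$3$j"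
  "(phi2 y ** X)$3$j = y$2$1 * X$2$j + y$2$2 * X$3$j"
  by (simp_all add: phi2_def matrix_matrix_mult_def sum_3)

lemma phi1_mult_entries:
  "(phi1 y ** X)$1$j = y$1$1 * X$1$j + y$1$2 * X$2$j" "(phi1 y ** X)$2$j = y$2$1 * X$1$j + y$2$2 * X$2$j"
  "(phi1 y ** X)$3$j = X$3$j"
  by (simp_all add: phi1_def matrix_matrix_mult_def sum_3)

lemma cancel_l: "A ** B = mat 1 \<Longrightarrow> M ** A ** B = M"
  by (metis matrix_mul_assoc matrix_mul_rid)

lemma SL3_entries: "X \<in> SL3 \<Longrightarrow> X$i$j \<in> ZO" unfolding SL3_def by blast

lemma SL3_det: "X \<in> SL3 \<Longrightarrow> X$1$1*X$2$2*X$3$3 + X$1$2*X$2$3*X$3$1 + X$1$3*X$2$1*X$3$2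
   - X$1$1*X$2$3*X$3$2 - X$1$2*X$2$1*X$3$3 - X$1$3*X$2$2*X$3$1 = 1"
  unfolding SL3_def by (simp add: det_3 algebra_simps)

lemma T1:
  assumes vr: "valid_reps C Rep" and X: "X \<in> SL3"
  shows "\<exists>y1 y2 y3 d u. y1 \<in> Yset C Rep \<and> y2 \<in> Yset C Rep \<and> y3 \<in> Yset C Rep \<and>
     (y2 = mat 1 \<longrightarrow> y1 = mat 1) \<and> d \<in> D3 \<and> u \<in> U3 \<and> X \<in> coset3 (FF y1 y2 y3 d u)"
proof -
  obtain y1 where y1: "y1 \<in> Yset C Rep" "y1$2$1 * X$2$1 + y1$2$2 * X$3$1 = 0"
    "X$3$1 = 0 \<longrightarrow> y1 = mat 1"
  proof (cases "X$3$1 = 0")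
    case True
    show ?thesis by (rule that[of "mat 1"]) (use True Y_I in \<open>auto simp: mat1_2\<close>)
  next
    case False
    have Z: "X$2$1 \<in> ZO" "X$3$1 \<in> ZO" using SL3_entries[OF X] by auto
    obtain g e f where gef: "g \<in> ZO" "e \<in> ZO" "f \<in> ZO" "g \<noteq> 0" "X$2$1 = g * e" "X$3$1 = g * f"
      "\<exists>p\<in>ZO. \<exists>q\<in>ZO. g = p * X$2$1 + q * X$3$1"
      using gcd_exists[OF Z] False by blast
    obtain p q where pq: "p \<in> ZO" "q \<in> ZO" "g = p * X$2$1 + q * X$3$1" using gef(7) by blast
    have "g * 1 = g * (p * e + q * f)" using pq(3) gef(5,6) by (simp add: algebra_simps)
    hence "p * e + q * f = 1" using gef(4) by simp
    hence cp: "cop f (-e)" unfolding cop_def using pq(1,2)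
      by (intro bexI[of _ q] bexI[of _ "-p"]) (auto simp: algebra_simps)
    have f0: "f \<noteq> 0" using False gef(6) by simp
    obtain y s where ys: "y \<in> Yset C Rep" "y \<noteq> mat 1" "s \<in> ZO" "y$2$1 = s * f" "y$2$2 = s * (-e)"
      using Y_exists[OF vr gef(3) _ f0 cp] gef(2) by auto
    show ?thesis
      by (rule that[of y]) (use ys False gef(5,6) in \<open>auto simp: algebra_simps\<close>)
  qed
  have S1: "y1 \<in> SL2" using Y_SL2[OF y1(1)] .
  define X1 where "X1 = phi2 y1 ** X"
  have X1S: "X1 \<in> SL3" unfolding X1_def by (rule SL3_mult[OF phi_SL3(1)[OF S1] X])
  have X1_31: "X1$3$1 = 0" unfolding X1_def phi2_mult_entries using y1(2) .
  have X1_21: "X1$2$1 = 0 \<Longrightarrow> X$3$1 = 0"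
  proof -
    assume "X1$2$1 = 0"
    hence a: "y1$1$1 * X$2$1 + y1$1$2 * X$3$1 = 0" unfolding X1_def phi2_mult_entries .
    have dt: "y1$1$1 * y1$2$2 - y1$1$2 * y1$2$1 = 1" using S1 unfolding SL2_iff by simp
    show "X$3$1 = 0" using a y1(2) dt by algebra
  qed
  obtain y2 where y2: "y2 \<in> Yset C Rep" "y2$2$1 * X1$1$1 + y2$2$2 * X1$2$1 = 0"
    "y2 = mat 1 \<longrightarrow> X1$2$1 = 0"
  proof (cases "X1$2$1 = 0")
    case True
    show ?thesis by (rule that[of "mat 1"]) (use True Y_I in \<open>auto simp: mat1_2\<close>)
  next
    case False
    have Z: "X1$1$1 \<in> ZO" "X1$2$1 \<in> ZO" "X1$1$2 \<in> ZO" "X1$1$3 \<in> ZO" "X1$2$2 \<in> ZO" "X1$2$3 \<in> ZO"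
       "X1$3$2 \<in> ZO" "X1$3$3 \<in> ZO" using SL3_entries[OF X1S] by auto
    have dt: "(X1$1$3 * X1$3$2 - X1$1$2 * X1$3$3) * X1$2$1 + (-(X1$2$2 * X1$3$3 - X1$2$3 * X1$3$2)) * (- X1$1$1) = 1"
      using SL3_det[OF X1S] X1_31 by (simp add: algebra_simps)
    have cp: "cop (X1$2$1) (- X1$1$1)" unfolding cop_def
      by (rule bexI[of _ "X1$1$3 * X1$3$2 - X1$1$2 * X1$3$3"], rule bexI[of _ "-(X1$2$2 * X1$3$3 - X1$2$3 * X1$3$2)"])
         (use dt Z in auto)
    obtain y s where ys: "y \<in> Yset C Rep" "y \<noteq> mat 1" "s \<in> ZO" "y$2$1 = s * X1$2$1" "y$2$2 = s * (- X1$1$1)"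
      using Y_exists[OF vr Z(2) _ False cp] Z(1) by auto
    show ?thesis
      by (rule that[of y]) (use ys in \<open>auto simp: algebra_simps\<close>)
  qed
  have S2: "y2 \<in> SL2" using Y_SL2[OF y2(1)] .
  define X2 where "X2 = phi1 y2 ** X1"
  have X2S: "X2 \<in> SL3" unfolding X2_def by (rule SL3_mult[OF phi_SL3(2)[OF S2] X1S])
  have X2_21: "X2$2$1 = 0" unfolding X2_def phi1_mult_entries using y2(2) .
  have X2_31: "X2$3$1 = 0" unfolding X2_def phi1_mult_entries using X1_31 .
  obtain y3 where y3: "y3 \<in> Yset C Rep" "y3$2$1 * X2$2$2 + y3$2$2 * X2$3$2 = 0"
  proof (cases "X2$3$2 = 0")
    case True
    show ?thesis by (rule that[of "mat 1"]) (use True Y_I in \<open>auto simp: mat1_2\<close>)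
  next
    case False
    have Z: "X2$1$1 \<in> ZO" "X2$2$2 \<in> ZO" "X2$2$3 \<in> ZO" "X2$3$2 \<in> ZO" "X2$3$3 \<in> ZO"
      using SL3_entries[OF X2S] by auto
    have dt: "(-(X2$1$1 * X2$2$3)) * X2$3$2 + (-(X2$1$1 * X2$3$3)) * (- X2$2$2) = 1"
      using SL3_det[OF X2S] X2_21 X2_31 by (simp add: algebra_simps)
    have cp: "cop (X2$3$2) (- X2$2$2)" unfolding cop_def
      by (rule bexI[of _ "-(X2$1$1 * X2$2$3)"], rule bexI[of _ "-(X2$1$1 * X2$3$3)"])
         (use dt Z in auto)
    obtain y s where ys: "y \<in> Yset C Rep" "s \<in> ZO" "y$2$1 = s * X2$3$2" "y$2$2 = s * (- X2$2$2)"
      using Y_exists[OF vr Z(4) _ False cp] Z(2) by auto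
    show ?thesis
      by (rule that[of y]) (use ys in \<open>auto simp: algebra_simps\<close>)
  qed
  have S3: "y3 \<in> SL2" using Y_SL2[OF y3(1)] .
  define X3 where "X3 = phi2 y3 ** X2"
  have X3S: "X3 \<in> SL3" unfolding X3_def by (rule SL3_mult[OF phi_SL3(1)[OF S3] X2S])
  have X3_21: "X3$2$1 = 0" unfolding X3_def phi2_mult_entries using X2_21 X2_31 by simp
  have X3_31: "X3$3$1 = 0" unfolding X3_def phi2_mult_entries using X2_21 X2_31 by simp
  have X3_32: "X3$3$2 = 0" unfolding X3_def phi2_mult_entries using y3(2) .
  obtain d u h where duh: "d \<in> D3" "u \<in> U3" "h \<in> Gamma_inf3" "X3 = d ** u ** h"
    using upper_decomp[OF X3S X3_21 X3_31 X3_32] by blast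
  have c1: "phi2 (matrix_inv y1) ** phi2 y1 = mat 1" using phi_cancel(1)[OF S1] .
  have c2: "phi1 (matrix_inv y2) ** phi1 y2 = mat 1" using phi_cancel(2)[OF S2] .
  have c3: "phi2 (matrix_inv y3) ** phi2 y3 = mat 1" using phi_cancel(1)[OF S3] .
  have "FF y1 y2 y3 d u ** h = phi2 (matrix_inv y1) ** phi1 (matrix_inv y2) ** phi2 (matrix_inv y3) ** X3"
    unfolding duh(4) by (simp add: matrix_mul_assoc)
  also have "\<dots> = X"
    unfolding X3_def X2_def X1_def
    by (simp add: matrix_mul_assoc cancel_l[OF c3] cancel_l[OF c2] c1 matrix_mul_lid)
  finally have "X \<in> coset3 (FF y1 y2 y3 d u)" unfolding coset3_def using duh(3) by blast
  moreover have "y2 = mat 1 \<longrightarrow> y1 = mat 1" using y2(3) X1_21 y1(3) by blast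
  ultimately show ?thesis using y1(1) y2(1) y3(1) duh(1,2) by blast
qed

lemma FF_D2: "FF (mat 1) (mat 1) y d u = phi2 (matrix_inv y) ** d ** u"
  by (simp add: inv_mat1_2 phi_mat1 matrix_mul_lid)

lemma FF_D10: "FF y1 y2 (mat 1) d u = phi2 (matrix_inv y1) ** phi1 (matrix_inv y2) ** d ** u"
  by (simp add: inv_mat1_2 phi_mat1 matrix_mul_rid)

lemma part0: "SL3 = Delta2 \<union> Delta10 \<union> Delta11"
    "Delta2 \<inter> Delta10 = {}" "Delta2 \<inter> Delta11 = {}" "Delta10 \<inter> Delta11 = {}"
  unfolding Delta2_def Delta10_def Delta11_def by auto

lemma disj_from: "(\<forall>m\<in>A. \<forall>n\<in>A. \<forall>X. X \<in> f m \<longrightarrow> X \<in> f n \<longrightarrow> m = n) \<Longrightarrow> disjoint_family_on f A"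
  unfolding disjoint_family_on_def by blast

theorem corollary2p17:
  fixes C :: "complex set" and Rep :: "complex \<Rightarrow> complex set"
  assumes "valid_reps C Rep"
  shows "SL3 = Delta2 \<union> Delta10 \<union> Delta11
    \<and> Delta2 \<inter> Delta10 = {} \<and> Delta2 \<inter> Delta11 = {} \<and> Delta10 \<inter> Delta11 = {}
    \<and> Delta2 = (\<Union>(y, d, u) \<in> Yset C Rep \<times> D3 \<times> U3.
                  coset3 (phi2 (matrix_inv y) ** d ** u))
    \<and> disjoint_family_on (\<lambda>(y, d, u). coset3 (phi2 (matrix_inv y) ** d ** u))
                  (Yset C Rep \<times> D3 \<times> U3)
    \<and> Delta10 = (\<Union>(y1, y2, d, u) \<in> Yset C Rep \<times> (Yset C Rep - {mat 1}) \<times> D3 \<times> U3.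
                  coset3 (phi2 (matrix_inv y1) ** phi1 (matrix_inv y2) ** d ** u))
    \<and> disjoint_family_on
        (\<lambda>(y1, y2, d, u). coset3 (phi2 (matrix_inv y1) ** phi1 (matrix_inv y2) ** d ** u))
        (Yset C Rep \<times> (Yset C Rep - {mat 1}) \<times> D3 \<times> U3)
    \<and> Delta11 = (\<Union>(y1, y2, y3, d, u) \<in>
                  Yset C Rep \<times> (Yset C Rep - {mat 1}) \<times> (Yset C Rep - {mat 1}) \<times> D3 \<times> U3.
                  coset3 (phi2 (matrix_inv y1) ** phi1 (matrix_inv y2) ** phi2 (matrix_inv y3) ** d ** u))
    \<and> disjoint_family_on
        (\<lambda>(y1, y2, y3, d, u).
           coset3 (phi2 (matrix_inv y1) ** phi1 (matrix_inv y2) ** phi2 (matrix_inv y3) ** d ** u))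
        (Yset C Rep \<times> (Yset C Rep - {mat 1}) \<times> (Yset C Rep - {mat 1}) \<times> D3 \<times> U3)"
proof -
  note vr = assms
  note YI = Y_I[of C Rep]
  have D2: "Delta2 = (\<Union>(y, d, u) \<in> Yset C Rep \<times> D3 \<times> U3. coset3 (phi2 (matrix_inv y) ** d ** u))"
  proof (intro equalityI subsetI)
    fix X assume X: "X \<in> Delta2"
    hence XS: "X \<in> SL3" using part0(1) by blast
    obtain y1 y2 y3 d u where T: "y1 \<in> Yset C Rep" "y2 \<in> Yset C Rep" "y3 \<in> Yset C Rep"
      "y2 = mat 1 \<longrightarrow> y1 = mat 1" "d \<in> D3" "u \<in> U3" "X \<in> coset3 (FF y1 y2 y3 d u)"
      using T1[OF vr XS] by blast
    have "y2 = mat 1" using T2(2)[OF vr T(1-3,5-7)] X by blast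
    hence "y1 = mat 1" "y2 = mat 1" using T(4) by blast+
    hence "X \<in> coset3 (FF (mat 1) (mat 1) y3 d u)" using T(7) by simp
    hence XC: "X \<in> coset3 (phi2 (matrix_inv y3) ** d ** u)" unfolding FF_D2 .
    show "X \<in> (\<Union>(y, d, u) \<in> Yset C Rep \<times> D3 \<times> U3. coset3 (phi2 (matrix_inv y) ** d ** u))"
      by (rule UN_I[of "(y3, d, u)"]) (use T(3,5,6) XC in auto)
  next
    fix X assume "X \<in> (\<Union>(y, d, u) \<in> Yset C Rep \<times> D3 \<times> U3. coset3 (phi2 (matrix_inv y) ** d ** u))"
    then obtain y d u where T: "y \<in> Yset C Rep" "d \<in> D3" "u \<in> U3" "X \<in> coset3 (phi2 (matrix_inv y) ** d ** u)"
      by auto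
    have T4: "X \<in> coset3 (FF (mat 1) (mat 1) y d u)" unfolding FF_D2 by (rule T(4))
    show "X \<in> Delta2" using T2(2)[OF vr YI YI T(1-3) T4] by blast
  qed
  have D2d: "disjoint_family_on (\<lambda>(y, d, u). coset3 (phi2 (matrix_inv y) ** d ** u)) (Yset C Rep \<times> D3 \<times> U3)"
  proof (rule disj_from, intro ballI allI impI)
    fix m n X assume mn: "m \<in> Yset C Rep \<times> D3 \<times> U3" "n \<in> Yset C Rep \<times> D3 \<times> U3"
      "X \<in> (\<lambda>(y, d, u). coset3 (phi2 (matrix_inv y) ** d ** u)) m"
      "X \<in> (\<lambda>(y, d, u). coset3 (phi2 (matrix_inv y) ** d ** u)) n"
    obtain y d u where m: "m = (y, d, u)" by (metis prod_cases3)
    obtain y' d' u' where n: "n = (y', d', u')" by (metis prod_cases3)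
    have A: "y \<in> Yset C Rep" "d \<in> D3" "u \<in> U3" "y' \<in> Yset C Rep" "d' \<in> D3" "u' \<in> U3"
      "X \<in> coset3 (FF (mat 1) (mat 1) y d u)" "X \<in> coset3 (FF (mat 1) (mat 1) y' d' u')"
      using mn unfolding m n FF_D2 by auto
    have "y = y' \<and> d = d' \<and> u = u'"
      using T3[OF vr YI YI A(1) YI YI A(4) _ _ A(2,5,3,6) A(7,8)] by blast
    thus "m = n" unfolding m n by simp
  qed
  have D10: "Delta10 = (\<Union>(y1, y2, d, u) \<in> Yset C Rep \<times> (Yset C Rep - {mat 1}) \<times> D3 \<times> U3.
                  coset3 (phi2 (matrix_inv y1) ** phi1 (matrix_inv y2) ** d ** u))"
  proof (intro equalityI subsetI)
    fix X assume X: "X \<in> Delta10"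
    hence XS: "X \<in> SL3" using part0(1) by blast
    obtain y1 y2 y3 d u where T: "y1 \<in> Yset C Rep" "y2 \<in> Yset C Rep" "y3 \<in> Yset C Rep"
      "y2 = mat 1 \<longrightarrow> y1 = mat 1" "d \<in> D3" "u \<in> U3" "X \<in> coset3 (FF y1 y2 y3 d u)"
      using T1[OF vr XS] by blast
    have "X \<notin> Delta2" "X \<notin> Delta11" using X part0 by blast+
    hence "y2 \<noteq> mat 1" "y3 = mat 1" using T2(2,3)[OF vr T(1-3,5-7)] by blast+
    hence "X \<in> coset3 (FF y1 y2 (mat 1) d u)" using T(7) by simp
    hence XC: "X \<in> coset3 (phi2 (matrix_inv y1) ** phi1 (matrix_inv y2) ** d ** u)" unfolding FF_D10 .
    show "X \<in> (\<Union>(y1, y2, d, u) \<in> Yset C Rep \<times> (Yset C Rep - {mat 1}) \<times> D3 \<times> U3.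
                  coset3 (phi2 (matrix_inv y1) ** phi1 (matrix_inv y2) ** d ** u))"
      by (rule UN_I[of "(y1, y2, d, u)"]) (use T(1,2,5,6) \<open>y2 \<noteq> mat 1\<close> XC in auto)
  next
    fix X assume "X \<in> (\<Union>(y1, y2, d, u) \<in> Yset C Rep \<times> (Yset C Rep - {mat 1}) \<times> D3 \<times> U3.
                  coset3 (phi2 (matrix_inv y1) ** phi1 (matrix_inv y2) ** d ** u))"
    then obtain y1 y2 d u where T: "y1 \<in> Yset C Rep" "y2 \<in> Yset C Rep" "y2 \<noteq> mat 1" "d \<in> D3" "u \<in> U3"
      "X \<in> coset3 (phi2 (matrix_inv y1) ** phi1 (matrix_inv y2) ** d ** u)"
      by auto
    have T6: "X \<in> coset3 (FF y1 y2 (mat 1) d u)" unfolding FF_D10 by (rule T(6))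
    have "X \<in> SL3" "X \<notin> Delta2" "X \<notin> Delta11" using T2[OF vr T(1,2) YI T(4,5) T6] T(3) by blast+
    thus "X \<in> Delta10" using part0(1) by blast
  qed
  have D10d: "disjoint_family_on
        (\<lambda>(y1, y2, d, u). coset3 (phi2 (matrix_inv y1) ** phi1 (matrix_inv y2) ** d ** u))
        (Yset C Rep \<times> (Yset C Rep - {mat 1}) \<times> D3 \<times> U3)"
  proof (rule disj_from, intro ballI allI impI)
    fix m n X assume mn: "m \<in> Yset C Rep \<times> (Yset C Rep - {mat 1}) \<times> D3 \<times> U3"
      "n \<in> Yset C Rep \<times> (Yset C Rep - {mat 1}) \<times> D3 \<times> U3"
      "X \<in> (\<lambda>(y1, y2, d, u). coset3 (phi2 (matrix_inv y1) ** phi1 (matrix_inv y2) ** d ** u)) m"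
      "X \<in> (\<lambda>(y1, y2, d, u). coset3 (phi2 (matrix_inv y1) ** phi1 (matrix_inv y2) ** d ** u)) n"
    obtain y1 y2 d u where m: "m = (y1, y2, d, u)" by (metis prod_cases4)
    obtain y1' y2' d' u' where n: "n = (y1', y2', d', u')" by (metis prod_cases4)
    have A: "y1 \<in> Yset C Rep" "y2 \<in> Yset C Rep" "y2 \<noteq> mat 1" "d \<in> D3" "u \<in> U3"
      "y1' \<in> Yset C Rep" "y2' \<in> Yset C Rep" "y2' \<noteq> mat 1" "d' \<in> D3" "u' \<in> U3"
      "X \<in> coset3 (FF y1 y2 (mat 1) d u)" "X \<in> coset3 (FF y1' y2' (mat 1) d' u')"
      using mn unfolding m n FF_D10 by auto
    have "y1 = y1' \<and> y2 = y2' \<and> d = d' \<and> u = u'"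
      using T3[OF vr A(1,2) YI A(6,7) YI _ _ A(4,9,5,10) A(11,12)] A(3,8) by blast
    thus "m = n" unfolding m n by simp
  qed
  have D11: "Delta11 = (\<Union>(y1, y2, y3, d, u) \<in>
                  Yset C Rep \<times> (Yset C Rep - {mat 1}) \<times> (Yset C Rep - {mat 1}) \<times> D3 \<times> U3.
                  coset3 (phi2 (matrix_inv y1) ** phi1 (matrix_inv y2) ** phi2 (matrix_inv y3) ** d ** u))"
  proof (intro equalityI subsetI)
    fix X assume X: "X \<in> Delta11"
    hence XS: "X \<in> SL3" using part0(1) by blast
    obtain y1 y2 y3 d u where T: "y1 \<in> Yset C Rep" "y2 \<in> Yset C Rep" "y3 \<in> Yset C Rep"
      "y2 = mat 1 \<longrightarrow> y1 = mat 1" "d \<in> D3" "u \<in> U3" "X \<in> coset3 (FF y1 y2 y3 d u)"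
      using T1[OF vr XS] by blast
    have "y2 \<noteq> mat 1" "y3 \<noteq> mat 1" using T2(3)[OF vr T(1-3,5-7)] X by blast+
    show "X \<in> (\<Union>(y1, y2, y3, d, u) \<in>
                  Yset C Rep \<times> (Yset C Rep - {mat 1}) \<times> (Yset C Rep - {mat 1}) \<times> D3 \<times> U3.
                  coset3 (phi2 (matrix_inv y1) ** phi1 (matrix_inv y2) ** phi2 (matrix_inv y3) ** d ** u))"
      by (rule UN_I[of "(y1, y2, y3, d, u)"]) (use T(1,2,3,5,6,7) \<open>y2 \<noteq> mat 1\<close> \<open>y3 \<noteq> mat 1\<close> in auto)
  next
    fix X assume "X \<in> (\<Union>(y1, y2, y3, d, u) \<in>
                  Yset C Rep \<times> (Yset C Rep - {mat 1}) \<times> (Yset C Rep - {mat 1}) \<times> D3 \<times> U3.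
                  coset3 (phi2 (matrix_inv y1) ** phi1 (matrix_inv y2) ** phi2 (matrix_inv y3) ** d ** u))"
    then obtain m where mm: "m \<in> Yset C Rep \<times> (Yset C Rep - {mat 1}) \<times> (Yset C Rep - {mat 1}) \<times> D3 \<times> U3"
      "X \<in> (\<lambda>(y1, y2, y3, d, u). coset3 (FF y1 y2 y3 d u)) m" by blast
    obtain y1 y2 y3 d u where m: "m = (y1, y2, y3, d, u)" by (metis prod_cases5)
    have T: "y1 \<in> Yset C Rep" "y2 \<in> Yset C Rep" "y3 \<in> Yset C Rep"
      "y2 \<noteq> mat 1" "y3 \<noteq> mat 1" "d \<in> D3" "u \<in> U3" "X \<in> coset3 (FF y1 y2 y3 d u)"
      using mm unfolding m by auto
    show "X \<in> Delta11" using T2(3)[OF vr T(1-3,6-8)] T(4,5) by blast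
  qed
  have D11d: "disjoint_family_on
        (\<lambda>(y1, y2, y3, d, u).
           coset3 (phi2 (matrix_inv y1) ** phi1 (matrix_inv y2) ** phi2 (matrix_inv y3) ** d ** u))
        (Yset C Rep \<times> (Yset C Rep - {mat 1}) \<times> (Yset C Rep - {mat 1}) \<times> D3 \<times> U3)"
  proof (rule disj_from, intro ballI allI impI)
    fix m n X assume mn: "m \<in> Yset C Rep \<times> (Yset C Rep - {mat 1}) \<times> (Yset C Rep - {mat 1}) \<times> D3 \<times> U3"
      "n \<in> Yset C Rep \<times> (Yset C Rep - {mat 1}) \<times> (Yset C Rep - {mat 1}) \<times> D3 \<times> U3"
      "X \<in> (\<lambda>(y1, y2, y3, d, u). coset3 (FF y1 y2 y3 d u)) m"
      "X \<in> (\<lambda>(y1, y2, y3, d, u). coset3 (FF y1 y2 y3 d u)) n"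
    obtain y1 y2 y3 d u where m: "m = (y1, y2, y3, d, u)" by (metis prod_cases5)
    obtain y1' y2' y3' d' u' where n: "n = (y1', y2', y3', d', u')" by (metis prod_cases5)
    have A: "y1 \<in> Yset C Rep" "y2 \<in> Yset C Rep" "y2 \<noteq> mat 1" "y3 \<in> Yset C Rep" "d \<in> D3" "u \<in> U3"
      "y1' \<in> Yset C Rep" "y2' \<in> Yset C Rep" "y2' \<noteq> mat 1" "y3' \<in> Yset C Rep" "d' \<in> D3" "u' \<in> U3"
      "X \<in> coset3 (FF y1 y2 y3 d u)" "X \<in> coset3 (FF y1' y2' y3' d' u')"
      using mn unfolding m n by auto
    have "y1 = y1' \<and> y2 = y2' \<and> y3 = y3' \<and> d = d' \<and> u = u'"
      using T3[OF vr A(1,2,4,7,8,10) _ _ A(5,11,6,12,13,14)] A(3,9) by blast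
    thus "m = n" unfolding m n by simp
  qed
  show ?thesis by (intro conjI part0 D2 D2d D10 D10d D11 D11d)
qed

end
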